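(* Let $p\in\mathbb C[z,w]$ be a polynomial with $Z(p)\cap Z(z)\cap\partial\mathbb D^2=\emptyset$, and let $\mathcal M=[p,f_1,\dots,f_n]$ be the submodule of $H^2(\mathbb D^2)$ generated by $p$ and some $f_1,\dots,f_n\in H^2(\mathbb D^2)$. Set $Q=\mathcal M\ominus[p]$ and $T_{z,Q}=P_QM_z|_Q$. Then $\ker T_{z,Q}^*$ is finite dimensional.
   Context: $H^2(\mathbb D^2)$ is the Hardy space of the bidisc, a Hilbert module over $\mathbb C[z,w]$ via multiplication. A submodule is a closed subspace invariant under multiplication by polynomials; $[g_1,\dots,g_m]$ denotes the smallest submodule containing $g_1,\dots,g_m$. $Z(p)$ is the zero set of $p$ in $\mathbb C^2$ and $Z(z)=\{(z,w)\in\mathbb C^2:z=0\}$. *)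

theory Defs
  imports "HOL-Analysis.Analysis"
begin

text \<open>H^2 of the bidisc, modelled (isometrically) by its Taylor coefficient sequences:
  f(z,w) = sum over (i,j) of f(i,j) z^i w^j, with square-summable coefficients.\<close>

type_synonym h2 = "nat \<times> nat \<Rightarrow> complex"

definition H2 :: "h2 set" where
  "H2 = {f. (\<lambda>k. (cmod (f k))\<^sup>2) summable_on UNIV}"

definition h2_inner :: "h2 \<Rightarrow> h2 \<Rightarrow> complex" where
  "h2_inner f g = infsum (\<lambda>k. f k * cnj (g k)) UNIV"

definition h2_norm :: "h2 \<Rightarrow> real" where
  "h2_norm f = sqrt (infsum (\<lambda>k. (cmod (f k))\<^sup>2) UNIV)"

text \<open>Polynomials in C[z,w]: finitely supported coefficient functions.\<close>
definition poly2 :: "h2 set" where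
  "poly2 = {c. finite {k. c k \<noteq> 0}}"

definition poly2_eval :: "h2 \<Rightarrow> complex \<times> complex \<Rightarrow> complex" where
  "poly2_eval c zw = (\<Sum>k\<in>{k. c k \<noteq> 0}. c k * fst zw ^ fst k * snd zw ^ snd k)"

definition Zset :: "h2 \<Rightarrow> (complex \<times> complex) set" where
  "Zset p = {zw. poly2_eval p zw = 0}"

definition bidisc :: "(complex \<times> complex) set" where
  "bidisc = {(z, w). cmod z < 1 \<and> cmod w < 1}"

text \<open>Multiplication of a function by another (Cauchy product of coefficients).\<close>
definition h2_mult :: "h2 \<Rightarrow> h2 \<Rightarrow> h2" where
  "h2_mult p f = (\<lambda>(m, n). \<Sum>i\<le>m. \<Sum>j\<le>n. p (i, j) * f (m - i, n - j))"

definition zpoly :: h2 where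
  "zpoly = (\<lambda>k. if k = (1, 0) then 1 else 0)"

definition is_submodule :: "h2 set \<Rightarrow> bool" where
  "is_submodule S \<longleftrightarrow>
     S \<subseteq> H2 \<and> (\<lambda>_. 0) \<in> S
     \<and> (\<forall>f\<in>S. \<forall>g\<in>S. (\<lambda>k. f k + g k) \<in> S)
     \<and> (\<forall>c. \<forall>f\<in>S. (\<lambda>k. c * f k) \<in> S)
     \<and> (\<forall>x f. (\<forall>n. x n \<in> S) \<and> f \<in> H2 \<and> (\<lambda>n. h2_norm (\<lambda>k. x n k - f k)) \<longlonglongrightarrow> 0
             \<longrightarrow> f \<in> S)
     \<and> (\<forall>q\<in>poly2. \<forall>f\<in>S. h2_mult q f \<in> S)"

definition gen_submodule :: "h2 set \<Rightarrow> h2 set" where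
  "gen_submodule G = \<Inter> {S. is_submodule S \<and> G \<subseteq> S}"

definition ominus :: "h2 set \<Rightarrow> h2 set \<Rightarrow> h2 set" where
  "ominus M N = {x\<in>M. \<forall>y\<in>N. h2_inner x y = 0}"

definition proj :: "h2 set \<Rightarrow> h2 \<Rightarrow> h2" where
  "proj Q x = (THE q. q \<in> Q \<and> (\<forall>y\<in>Q. h2_inner (\<lambda>k. x k - q k) y = 0))"

definition Tz :: "h2 set \<Rightarrow> h2 \<Rightarrow> h2" where
  "Tz Q y = proj Q (h2_mult zpoly y)"

definition adj :: "h2 set \<Rightarrow> (h2 \<Rightarrow> h2) \<Rightarrow> h2 \<Rightarrow> h2" where
  "adj Q T x = (THE u. u \<in> Q \<and> (\<forall>y\<in>Q. h2_inner (T y) x = h2_inner y u))"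

definition kernel_on :: "h2 set \<Rightarrow> (h2 \<Rightarrow> h2) \<Rightarrow> h2 set" where
  "kernel_on Q T = {x\<in>Q. T x = (\<lambda>_. 0)}"

definition fin_dim :: "h2 set \<Rightarrow> bool" where
  "fin_dim K \<longleftrightarrow> (\<exists>B. finite B \<and>
      (\<forall>x\<in>K. \<exists>c::h2 \<Rightarrow> complex. x = (\<lambda>k. \<Sum>b\<in>B. c b * b k)))"

end

theory Submission
  imports Defs "HOL-Computational_Algebra.Polynomial_FPS"
begin

definition nsq :: "h2 \<Rightarrow> real" where
  "nsq f = infsum (\<lambda>k. (cmod (f k))\<^sup>2) UNIV"

lemma h2_norm_nsq: "h2_norm f = sqrt (nsq f)"
  by (simp add: h2_norm_def nsq_def)

lemma nsq_nonneg: "nsq f \<ge> 0"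
  unfolding nsq_def by (rule infsum_nonneg) simp

lemma H2_sum: "f \<in> H2 \<Longrightarrow> (\<lambda>k. (cmod (f k))\<^sup>2) summable_on UNIV"
  by (simp add: H2_def)

lemma sq_add_le: "(cmod (a + b))\<^sup>2 \<le> 2 * (cmod a)\<^sup>2 + 2 * (cmod b)\<^sup>2"
proof -
  have "cmod (a+b) \<le> cmod a + cmod b" by (rule norm_triangle_ineq)
  hence "(cmod (a+b))\<^sup>2 \<le> (cmod a + cmod b)\<^sup>2" by (simp add: power_mono)
  also have "\<dots> \<le> 2 * (cmod a)\<^sup>2 + 2 * (cmod b)\<^sup>2"
    by (smt (verit) sum_squares_bound power2_sum)
  finally show ?thesis .
qed

lemma H2_add: "f \<in> H2 \<Longrightarrow> g \<in> H2 \<Longrightarrow> (\<lambda>k. f k + g k) \<in> H2"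
  unfolding H2_def
  apply (simp)
  apply (rule summable_on_comparison_test[where f="\<lambda>k. 2 * (cmod (f k))\<^sup>2 + 2 * (cmod (g k))\<^sup>2"])
    apply (intro summable_on_add summable_on_cmult_right; simp)
  using sq_add_le by auto

lemma H2_scale: "f \<in> H2 \<Longrightarrow> (\<lambda>k. c * f k) \<in> H2"
  unfolding H2_def
  by (simp add: norm_mult power_mult_distrib summable_on_cmult_right)

lemma H2_zero: "(\<lambda>_. 0) \<in> H2"
  unfolding H2_def by simp

lemma H2_uminus: "f \<in> H2 \<Longrightarrow> (\<lambda>k. - f k) \<in> H2"
  unfolding H2_def by simp

lemma H2_diff: "f \<in> H2 \<Longrightarrow> g \<in> H2 \<Longrightarrow> (\<lambda>k. f k - g k) \<in> H2"
  using H2_add[of f "\<lambda>k. - g k"] H2_uminus[of g] by simp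

lemma ab_le_sq: "(a::real) \<ge> 0 \<Longrightarrow> b \<ge> 0 \<Longrightarrow> a * b \<le> a\<^sup>2 + b\<^sup>2"
  using sum_squares_bound[of a b] mult_nonneg_nonneg[of a b] by linarith

lemma hinner_summable: assumes "f \<in> H2" "g \<in> H2"
  shows "(\<lambda>k. f k * cnj (g k)) summable_on UNIV"
proof (rule abs_summable_summable)
  have s: "(\<lambda>k. (cmod (f k))\<^sup>2 + (cmod (g k))\<^sup>2) summable_on UNIV"
    by (intro summable_on_add H2_sum assms)
  show "(\<lambda>k. norm (f k * cnj (g k))) summable_on UNIV"
  proof (rule summable_on_comparison_test[OF s])
    fix k
    show "norm (f k * cnj (g k)) \<le> (cmod (f k))\<^sup>2 + (cmod (g k))\<^sup>2"
      unfolding norm_mult complex_mod_cnj by (rule ab_le_sq) auto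
  qed simp
qed

lemma hinner_add_left: assumes "f \<in> H2" "g \<in> H2" "h \<in> H2"
  shows "h2_inner (\<lambda>k. f k + g k) h = h2_inner f h + h2_inner g h"
proof -
  have "h2_inner (\<lambda>k. f k + g k) h = infsum (\<lambda>k. f k * cnj (h k) + g k * cnj (h k)) UNIV"
    unfolding h2_inner_def by (simp add: distrib_right)
  also have "\<dots> = h2_inner f h + h2_inner g h"
    unfolding h2_inner_def by (rule infsum_add; rule hinner_summable; fact)
  finally show ?thesis .
qed

lemma hinner_add_right: assumes "f \<in> H2" "g \<in> H2" "h \<in> H2"
  shows "h2_inner h (\<lambda>k. f k + g k) = h2_inner h f + h2_inner h g"
proof -
  have "h2_inner h (\<lambda>k. f k + g k) = infsum (\<lambda>k. h k * cnj (f k) + h k * cnj (g k)) UNIV"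
    unfolding h2_inner_def by (simp add: distrib_left)
  also have "\<dots> = h2_inner h f + h2_inner h g"
    unfolding h2_inner_def by (rule infsum_add; rule hinner_summable; fact)
  finally show ?thesis .
qed

lemma hinner_scale_left: "h2_inner (\<lambda>k. c * f k) h = c * h2_inner f h"
proof -
  have "h2_inner (\<lambda>k. c * f k) h = infsum (\<lambda>k. c * (f k * cnj (h k))) UNIV"
    unfolding h2_inner_def by (simp add: mult.assoc)
  also have "\<dots> = c * h2_inner f h"
    unfolding h2_inner_def
    by (cases "c = 0") (simp_all add: infsum_cmult_right' )
  finally show ?thesis .
qed

lemma hinner_scale_right: "h2_inner h (\<lambda>k. c * f k) = cnj c * h2_inner h f"
proof -
  have "h2_inner h (\<lambda>k. c * f k) = infsum (\<lambda>k. cnj c * (h k * cnj (f k))) UNIV"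
    unfolding h2_inner_def by (simp add: mult.commute mult.left_commute)
  also have "\<dots> = cnj c * h2_inner h f"
    unfolding h2_inner_def
    by (cases "c = 0") (simp_all add: infsum_cmult_right' )
  finally show ?thesis .
qed

lemma hinner_commute: "h2_inner g f = cnj (h2_inner f g)"
proof -
  have "h2_inner g f = infsum (\<lambda>k. cnj (f k * cnj (g k))) UNIV"
    unfolding h2_inner_def by (simp add: mult.commute)
  also have "\<dots> = cnj (h2_inner f g)" unfolding h2_inner_def by (rule infsum_cnj)
  finally show ?thesis .
qed

lemma hinner_uminus_left: "h2_inner (\<lambda>k. - f k) h = - h2_inner f h"
  using hinner_scale_left[of "-1" f h] by simp

lemma hinner_uminus_right: "h2_inner h (\<lambda>k. - f k) = - h2_inner h f"
  using hinner_scale_right[of h "-1" f] by simp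

lemma hinner_diff_left: "f \<in> H2 \<Longrightarrow> g \<in> H2 \<Longrightarrow> h \<in> H2 \<Longrightarrow>
  h2_inner (\<lambda>k. f k - g k) h = h2_inner f h - h2_inner g h"
  using hinner_add_left[of f "\<lambda>k. - g k" h] H2_uminus hinner_uminus_left by simp

lemma hinner_diff_right: "f \<in> H2 \<Longrightarrow> g \<in> H2 \<Longrightarrow> h \<in> H2 \<Longrightarrow>
  h2_inner h (\<lambda>k. f k - g k) = h2_inner h f - h2_inner h g"
  using hinner_add_right[of f "\<lambda>k. - g k" h] H2_uminus hinner_uminus_right by simp

lemma hinner_zero_left[simp]: "h2_inner (\<lambda>_. 0) h = 0"
  unfolding h2_inner_def by simp

lemma hinner_zero_right[simp]: "h2_inner h (\<lambda>_. 0) = 0"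
  unfolding h2_inner_def by simp

lemma hinner_self: "f \<in> H2 \<Longrightarrow> h2_inner f f = complex_of_real (nsq f)"
proof -
  assume f: "f \<in> H2"
  have "((\<lambda>k. (cmod (f k))\<^sup>2) has_sum nsq f) UNIV"
    unfolding nsq_def using H2_sum[OF f] by simp
  from has_sum_of_real[OF this]
  have "((\<lambda>k. complex_of_real ((cmod (f k))\<^sup>2)) has_sum complex_of_real (nsq f)) UNIV" .
  moreover have "(\<lambda>k. complex_of_real ((cmod (f k))\<^sup>2)) = (\<lambda>k. f k * cnj (f k))"
    using complex_norm_square by (metis of_real_power)
  ultimately show ?thesis unfolding h2_inner_def by (simp add: infsumI)
qed

lemma nsq_eq_0: assumes "f \<in> H2" "nsq f = 0" shows "f = (\<lambda>_. 0)"
proof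
  fix k
  have "(cmod (f k))\<^sup>2 = 0"
    by (rule nonneg_infsum_le_0D[where A=UNIV]) (use assms H2_sum in \<open>auto simp: nsq_def\<close>)
  thus "f k = 0" by simp
qed

lemma nsq_inner: "f \<in> H2 \<Longrightarrow> nsq f = Re (h2_inner f f)"
  by (simp add: hinner_self)

lemma nsq_expand: assumes e: "e \<in> H2" and y: "y \<in> H2"
  shows "nsq (\<lambda>k. e k - t * y k) = nsq e - 2 * Re (cnj t * h2_inner e y) + (cmod t)\<^sup>2 * nsq y"
proof -
  have ty: "(\<lambda>k. t * y k) \<in> H2" using H2_scale[OF y] .
  have d: "(\<lambda>k. e k - t * y k) \<in> H2" using H2_diff[OF e ty] .
  have "h2_inner (\<lambda>k. e k - t * y k) (\<lambda>k. e k - t * y k)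
      = h2_inner e e - h2_inner e (\<lambda>k. t * y k) - (h2_inner (\<lambda>k. t * y k) e - h2_inner (\<lambda>k. t * y k) (\<lambda>k. t * y k))"
    by (simp add: hinner_diff_left[OF e ty d] hinner_diff_right[OF e ty e] hinner_diff_right[OF e ty ty])
  also have "\<dots> = h2_inner e e - cnj t * h2_inner e y - (t * cnj (h2_inner e y) - t * cnj t * h2_inner y y)"
    by (simp add: hinner_scale_left hinner_scale_right hinner_commute[of y e])
  finally have *: "h2_inner (\<lambda>k. e k - t * y k) (\<lambda>k. e k - t * y k) = \<dots>" .
  have "nsq (\<lambda>k. e k - t * y k) = Re (h2_inner e e - cnj t * h2_inner e y - (t * cnj (h2_inner e y) - t * cnj t * h2_inner y y))"
    using nsq_inner[OF d] * by simp
  also have "\<dots> = nsq e - 2 * Re (cnj t * h2_inner e y) + (cmod t)\<^sup>2 * nsq y"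
    using hinner_self[OF e] hinner_self[OF y]
    by (simp add: complex_mult_cnj cmod_power2 algebra_simps)
  finally show ?thesis .
qed

lemma cauchy_schwarz: assumes f: "f \<in> H2" and g: "g \<in> H2"
  shows "cmod (h2_inner f g) \<le> h2_norm f * h2_norm g"
proof (cases "nsq g = 0")
  case True
  then have "g = (\<lambda>_. 0)" using nsq_eq_0 g by blast
  then show ?thesis by (simp add: h2_norm_nsq nsq_nonneg)
next
  case False
  then have pos: "nsq g > 0" using nsq_nonneg[of g] by linarith
  define a where "a = h2_inner f g"
  define t where "t = a / complex_of_real (nsq g)"
  have "0 \<le> nsq (\<lambda>k. f k - t * g k)" by (rule nsq_nonneg)
  also have "\<dots> = nsq f - 2 * Re (cnj t * a) + (cmod t)\<^sup>2 * nsq g"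
    unfolding a_def by (rule nsq_expand[OF f g])
  also have "cnj t * a = complex_of_real ((cmod a)\<^sup>2 / nsq g)"
  proof -
    have "cnj t * a = (a * cnj a) / complex_of_real (nsq g)"
      unfolding t_def by (simp add: mult.commute)
    also have "a * cnj a = complex_of_real ((cmod a)\<^sup>2)" by (rule complex_norm_square[symmetric])
    finally show ?thesis by simp
  qed
  also have "(cmod t)\<^sup>2 * nsq g = (cmod a)\<^sup>2 / nsq g"
    unfolding t_def using pos by (simp add: norm_divide power_divide power2_eq_square)
  finally have "(cmod a)\<^sup>2 / nsq g \<le> nsq f" by simp
  hence "(cmod a)\<^sup>2 \<le> nsq f * nsq g" using pos by (simp add: divide_le_eq)
  hence "cmod a \<le> sqrt (nsq f * nsq g)" by (simp add: real_le_rsqrt)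
  thus ?thesis unfolding a_def h2_norm_nsq by (simp add: real_sqrt_mult)
qed

lemma h2_norm_nonneg: "h2_norm f \<ge> 0"
  by (simp add: h2_norm_nsq nsq_nonneg)

lemma nsq_norm: "nsq f = (h2_norm f)\<^sup>2"
  by (simp add: h2_norm_nsq nsq_nonneg)

lemma norm_triangle: assumes f: "f \<in> H2" and g: "g \<in> H2"
  shows "h2_norm (\<lambda>k. f k + g k) \<le> h2_norm f + h2_norm g"
proof -
  have "nsq (\<lambda>k. f k + g k) = nsq (\<lambda>k. f k - (-1) * g k)" by simp
  also have "\<dots> = nsq f + 2 * Re (h2_inner f g) + nsq g"
    using nsq_expand[OF f g, of "-1"] by simp
  also have "\<dots> \<le> nsq f + 2 * (h2_norm f * h2_norm g) + nsq g"
    using cauchy_schwarz[OF f g] complex_Re_le_cmod[of "h2_inner f g"] by linarith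
  also have "\<dots> = (h2_norm f + h2_norm g)\<^sup>2"
    by (simp add: nsq_norm power2_sum)
  finally have "(h2_norm (\<lambda>k. f k + g k))\<^sup>2 \<le> (h2_norm f + h2_norm g)\<^sup>2"
    by (simp add: nsq_norm)
  thus ?thesis using h2_norm_nonneg[of f] h2_norm_nonneg[of g]
    by (meson add_nonneg_nonneg power2_le_imp_le)
qed

lemma norm_scale: "h2_norm (\<lambda>k. c * f k) = cmod c * h2_norm f"
proof -
  have "nsq (\<lambda>k. c * f k) = (cmod c)\<^sup>2 * nsq f"
    unfolding nsq_def by (simp add: norm_mult power_mult_distrib infsum_cmult_right')
  thus ?thesis by (simp add: h2_norm_nsq real_sqrt_mult)
qed

lemma norm_diff_triangle: assumes "f \<in> H2" "g \<in> H2" "h \<in> H2"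
  shows "h2_norm (\<lambda>k. f k - h k) \<le> h2_norm (\<lambda>k. f k - g k) + h2_norm (\<lambda>k. g k - h k)"
  using norm_triangle[OF H2_diff[OF assms(1,2)] H2_diff[OF assms(2,3)]] by simp

lemma norm_commute: "h2_norm (\<lambda>k. f k - g k) = h2_norm (\<lambda>k. g k - f k)"
  unfolding h2_norm_def by (simp add: norm_minus_commute)

lemma norm_zero_iff: "f \<in> H2 \<Longrightarrow> h2_norm f = 0 \<longleftrightarrow> f = (\<lambda>_. 0)"
  using nsq_eq_0[of f] by (auto simp: h2_norm_nsq nsq_def)

lemma inner_cont_left: assumes "\<And>n. x n \<in> H2" "x0 \<in> H2" "y \<in> H2"
  and lim: "(\<lambda>n. h2_norm (\<lambda>k. x n k - x0 k)) \<longlonglongrightarrow> 0"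
  shows "(\<lambda>n. h2_inner (x n) y) \<longlonglongrightarrow> h2_inner x0 y"
proof -
  have "(\<lambda>n. h2_inner (x n) y - h2_inner x0 y) \<longlonglongrightarrow> 0"
  proof (rule Lim_null_comparison[where g="\<lambda>n. h2_norm (\<lambda>k. x n k - x0 k) * h2_norm y"])
    show "\<forall>\<^sub>F n in sequentially. norm (h2_inner (x n) y - h2_inner x0 y) \<le> h2_norm (\<lambda>k. x n k - x0 k) * h2_norm y"
      using cauchy_schwarz[OF H2_diff[OF assms(1) assms(2)] assms(3)]
        hinner_diff_left[OF assms(1) assms(2) assms(3)] by simp
    show "(\<lambda>n. h2_norm (\<lambda>k. x n k - x0 k) * h2_norm y) \<longlonglongrightarrow> 0"
      using tendsto_mult_left_zero[OF lim] by simp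
  qed
  thus ?thesis by (simp add: LIM_zero_iff)
qed

lemma inner_cont_right: assumes "\<And>n. x n \<in> H2" "x0 \<in> H2" "y \<in> H2"
  and lim: "(\<lambda>n. h2_norm (\<lambda>k. x n k - x0 k)) \<longlonglongrightarrow> 0"
  shows "(\<lambda>n. h2_inner y (x n)) \<longlonglongrightarrow> h2_inner y x0"
proof -
  have "(\<lambda>n. cnj (h2_inner (x n) y)) \<longlonglongrightarrow> cnj (h2_inner x0 y)"
    by (rule tendsto_cnj, rule inner_cont_left[OF assms])
  thus ?thesis by (simp add: hinner_commute[of y])
qed

lemma coord_le: assumes "f \<in> H2" shows "cmod (f k) \<le> h2_norm f"
proof -
  have "sum (\<lambda>k. (cmod (f k))\<^sup>2) {k} \<le> nsq f"
    unfolding nsq_def by (rule finite_sum_le_infsum) (use H2_sum[OF assms] in auto)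
  hence "(cmod (f k))\<^sup>2 \<le> nsq f" by simp
  thus ?thesis unfolding h2_norm_nsq by (simp add: real_le_rsqrt)
qed

lemma h2_complete:
  assumes xin: "\<And>n. x n \<in> H2"
    and cau: "\<And>e. e > 0 \<Longrightarrow> \<exists>N. \<forall>m\<ge>N. \<forall>n\<ge>N. h2_norm (\<lambda>k. x m k - x n k) < e"
  shows "\<exists>f\<in>H2. (\<lambda>n. h2_norm (\<lambda>k. x n k - f k)) \<longlonglongrightarrow> 0"
proof -
  have cauk: "Cauchy (\<lambda>n. x n k)" for k
  proof (rule metric_CauchyI)
    fix e :: real assume "e > 0"
    then obtain N where N: "\<forall>m\<ge>N. \<forall>n\<ge>N. h2_norm (\<lambda>k. x m k - x n k) < e" using cau by blast
    show "\<exists>M. \<forall>m\<ge>M. \<forall>n\<ge>M. dist (x m k) (x n k) < e"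
    proof (intro exI allI impI)
      fix m n assume "m \<ge> N" "n \<ge> N"
      then show "dist (x m k) (x n k) < e"
        using N coord_le[OF H2_diff[OF xin[of m] xin[of n]], of k] by (simp add: dist_norm) (meson le_less_trans)
    qed
  qed
  define f where "f k = lim (\<lambda>n. x n k)" for k
  have fk: "(\<lambda>n. x n k) \<longlonglongrightarrow> f k" for k
    unfolding f_def using cauk[of k] Cauchy_convergent_iff convergent_LIMSEQ_iff by blast
  have key: "\<exists>N. \<forall>n\<ge>N. (\<lambda>k. x n k - f k) \<in> H2 \<and> nsq (\<lambda>k. x n k - f k) \<le> e\<^sup>2" if "e > 0" for e
  proof -
    obtain N where N: "\<forall>m\<ge>N. \<forall>n\<ge>N. h2_norm (\<lambda>k. x m k - x n k) < e" using cau \<open>e > 0\<close> by blast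
    have fin: "sum (\<lambda>k. (cmod (x n k - f k))\<^sup>2) F \<le> e\<^sup>2" if "n \<ge> N" "finite F" for n F
    proof -
      have lim: "(\<lambda>m. sum (\<lambda>k. (cmod (x n k - x m k))\<^sup>2) F) \<longlonglongrightarrow> sum (\<lambda>k. (cmod (x n k - f k))\<^sup>2) F"
        by (intro tendsto_intros fk)
      have "sum (\<lambda>k. (cmod (x n k - x m k))\<^sup>2) F \<le> e\<^sup>2" if "m \<ge> N" for m
      proof -
        have "sum (\<lambda>k. (cmod (x n k - x m k))\<^sup>2) F \<le> nsq (\<lambda>k. x n k - x m k)"
          unfolding nsq_def by (rule finite_sum_le_infsum) (use H2_sum[OF H2_diff[OF xin xin]] \<open>finite F\<close> in auto)
        also have "\<dots> = (h2_norm (\<lambda>k. x n k - x m k))\<^sup>2" by (rule nsq_norm)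
        also have "\<dots> \<le> e\<^sup>2" using N \<open>n \<ge> N\<close> that h2_norm_nonneg
          by (meson less_imp_le power_mono)
        finally show ?thesis .
      qed
      then show ?thesis using LIMSEQ_le_const2[OF lim] by blast
    qed
    show ?thesis
    proof (intro exI allI impI conjI)
      fix n assume "n \<ge> N"
      have s: "(\<lambda>k. (cmod (x n k - f k))\<^sup>2) summable_on UNIV"
        by (rule nonneg_bdd_above_summable_on) (use fin[OF \<open>n \<ge> N\<close>] in \<open>auto intro!: bdd_aboveI2\<close>)
      thus "(\<lambda>k. x n k - f k) \<in> H2" by (simp add: H2_def)
      show "nsq (\<lambda>k. x n k - f k) \<le> e\<^sup>2"
        unfolding nsq_def by (rule infsum_le_finite_sums[OF s]) (use fin[OF \<open>n \<ge> N\<close>] in auto)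
    qed
  qed
  obtain N1 where N1: "\<forall>n\<ge>N1. (\<lambda>k. x n k - f k) \<in> H2" using key[of 1] by auto
  have fH: "f \<in> H2"
  proof -
    have "(\<lambda>k. x N1 k - (x N1 k - f k)) \<in> H2" using H2_diff[OF xin[of N1] N1[rule_format, of N1]] by simp
    thus ?thesis by simp
  qed
  have "(\<lambda>n. h2_norm (\<lambda>k. x n k - f k)) \<longlonglongrightarrow> 0"
  proof (rule LIMSEQ_I)
    fix r :: real assume "r > 0"
    obtain N where N: "\<forall>n\<ge>N. (\<lambda>k. x n k - f k) \<in> H2 \<and> nsq (\<lambda>k. x n k - f k) \<le> (r/2)\<^sup>2"
      using key[of "r/2"] \<open>r > 0\<close> by auto
    show "\<exists>no. \<forall>n\<ge>no. norm (h2_norm (\<lambda>k. x n k - f k) - 0) < r"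
    proof (intro exI allI impI)
      fix n assume "n \<ge> N"
      hence "(h2_norm (\<lambda>k. x n k - f k))\<^sup>2 \<le> (r/2)\<^sup>2" using N nsq_norm by metis
      hence "h2_norm (\<lambda>k. x n k - f k) \<le> r/2"
        using \<open>r > 0\<close> by (simp add: abs_le_square_iff h2_norm_nonneg flip: abs_le_square_iff)
      thus "norm (h2_norm (\<lambda>k. x n k - f k) - 0) < r" using \<open>r > 0\<close> h2_norm_nonneg by simp
    qed
  qed
  with fH show ?thesis by blast
qed

definition csub :: "h2 set \<Rightarrow> bool" where
  "csub V \<longleftrightarrow> V \<subseteq> H2 \<and> (\<lambda>_. 0) \<in> V
     \<and> (\<forall>f\<in>V. \<forall>g\<in>V. (\<lambda>k. f k + g k) \<in> V)
     \<and> (\<forall>c. \<forall>f\<in>V. (\<lambda>k. c * f k) \<in> V)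
     \<and> (\<forall>x f. (\<forall>n. x n \<in> V) \<and> f \<in> H2 \<and> (\<lambda>n. h2_norm (\<lambda>k. x n k - f k)) \<longlonglongrightarrow> 0
             \<longrightarrow> f \<in> V)"

lemma csubD:
  assumes "csub V"
  shows "V \<subseteq> H2" "(\<lambda>_. 0) \<in> V"
    "\<And>f g. f \<in> V \<Longrightarrow> g \<in> V \<Longrightarrow> (\<lambda>k. f k + g k) \<in> V"
    "\<And>c f. f \<in> V \<Longrightarrow> (\<lambda>k. c * f k) \<in> V"
    "\<And>x f. (\<And>n. x n \<in> V) \<Longrightarrow> f \<in> H2 \<Longrightarrow> (\<lambda>n. h2_norm (\<lambda>k. x n k - f k)) \<longlonglongrightarrow> 0 \<Longrightarrow> f \<in> V"
  using assms unfolding csub_def by blast+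

lemma csub_diff: assumes "csub V" "f \<in> V" "g \<in> V" shows "(\<lambda>k. f k - g k) \<in> V"
  using csubD(3)[OF assms(1) assms(2) csubD(4)[OF assms(1) assms(3), of "-1"]] by simp

lemma parallelogram: assumes f: "f \<in> H2" and g: "g \<in> H2"
  shows "nsq (\<lambda>k. f k + g k) + nsq (\<lambda>k. f k - g k) = 2 * nsq f + 2 * nsq g"
  using nsq_expand[OF f g, of 1] nsq_expand[OF f g, of "-1"] by simp

lemma proj_exists: assumes V: "csub V" and x: "x \<in> H2"
  shows "\<exists>q\<in>V. \<forall>y\<in>V. h2_inner (\<lambda>k. x k - q k) y = 0"
proof -
  have VH: "V \<subseteq> H2" using csubD[OF V] by blast
  define D where "D = (\<lambda>v. h2_norm (\<lambda>k. x k - v k)) ` V"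
  define d where "d = Inf D"
  have Dne: "D \<noteq> {}" unfolding D_def using csubD(2)[OF V] by blast
  have Dbdd: "bdd_below D" unfolding D_def by (rule bdd_belowI[of _ 0]) (auto simp: h2_norm_nonneg)
  have d_le: "d \<le> h2_norm (\<lambda>k. x k - v k)" if "v \<in> V" for v
    unfolding d_def by (rule cInf_lower[OF _ Dbdd]) (use that in \<open>auto simp: D_def\<close>)
  have d0: "d \<ge> 0" unfolding d_def using Dne
    by (rule cInf_greatest) (auto simp: D_def h2_norm_nonneg)
  define eps where "eps n = sqrt (d\<^sup>2 + inverse (real (Suc n)))" for n
  have "\<exists>v\<in>V. h2_norm (\<lambda>k. x k - v k) < eps n" for n
  proof -
    have "d < eps n" unfolding eps_def using d0
      by (metis add_less_cancel_left add.right_neutral inverse_positive_iff_positive of_nat_0_less_iff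
          real_less_rsqrt zero_less_Suc power2_eq_square abs_of_nonneg real_sqrt_abs real_sqrt_less_iff)
    then obtain t where "t \<in> D" "t < eps n" using cInf_lessD[OF Dne] unfolding d_def by blast
    thus ?thesis unfolding D_def by auto
  qed
  then obtain v where vV: "\<And>n. v n \<in> V" and vlt: "\<And>n. h2_norm (\<lambda>k. x k - v n k) < eps n"
    by metis
  have vH: "v n \<in> H2" for n using vV VH by blast
  have vsq: "nsq (\<lambda>k. x k - v n k) \<le> d\<^sup>2 + inverse (real (Suc n))" for n
  proof -
    have "h2_norm (\<lambda>k. x k - v n k) \<le> eps n" using vlt[of n] by simp
    hence "(h2_norm (\<lambda>k. x k - v n k))\<^sup>2 \<le> (eps n)\<^sup>2" using h2_norm_nonneg by (meson power_mono)
    thus ?thesis unfolding eps_def nsq_norm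
      by (smt (verit) inverse_nonnegative_iff_nonnegative of_nat_0_le_iff real_sqrt_pow2 zero_le_power2)
  qed
  have cdist: "nsq (\<lambda>k. v m k - v n k) \<le> 2 * inverse (real (Suc n)) + 2 * inverse (real (Suc m))" for m n
  proof -
    have a: "(\<lambda>k. x k - v n k) \<in> H2" "(\<lambda>k. x k - v m k) \<in> H2" using H2_diff[OF x vH] by auto
    define mid where "mid = (\<lambda>k. (1/2) * (v n k + v m k))"
    have midV: "mid \<in> V" unfolding mid_def using csubD(3,4)[OF V] vV by blast
    have "d\<^sup>2 \<le> nsq (\<lambda>k. x k - mid k)"
      using d_le[OF midV] d0 unfolding nsq_norm by (meson power_mono)
    also have "nsq (\<lambda>k. x k - mid k) = (1/4) * nsq (\<lambda>k. (x k - v n k) + (x k - v m k))"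
    proof -
      have "(\<lambda>k. (x k - v n k) + (x k - v m k)) = (\<lambda>k. 2 * (x k - mid k))"
        unfolding mid_def by (auto simp: algebra_simps)
      moreover have "nsq (\<lambda>k. 2 * (x k - mid k)) = 4 * nsq (\<lambda>k. x k - mid k)"
        using norm_scale[of 2 "\<lambda>k. x k - mid k"] by (simp add: nsq_norm power_mult_distrib)
      ultimately show ?thesis by simp
    qed
    finally have 1: "4 * d\<^sup>2 \<le> nsq (\<lambda>k. (x k - v n k) + (x k - v m k))" by simp
    have 2: "nsq (\<lambda>k. (x k - v n k) + (x k - v m k)) + nsq (\<lambda>k. (x k - v n k) - (x k - v m k))
        = 2 * nsq (\<lambda>k. x k - v n k) + 2 * nsq (\<lambda>k. x k - v m k)"
      by (rule parallelogram[OF a])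
    have 3: "(\<lambda>k. (x k - v n k) - (x k - v m k)) = (\<lambda>k. v m k - v n k)" by auto
    show ?thesis using 1 2 3 vsq[of n] vsq[of m] by simp
  qed
  have "\<exists>q\<in>H2. (\<lambda>n. h2_norm (\<lambda>k. v n k - q k)) \<longlonglongrightarrow> 0"
  proof (rule h2_complete[OF vH])
    fix e :: real assume "e > 0"
    obtain N where N: "inverse (real (Suc N)) < e\<^sup>2 / 4"
      using reals_Archimedean[of "e\<^sup>2/4"] \<open>e > 0\<close> by auto
    show "\<exists>N. \<forall>m\<ge>N. \<forall>n\<ge>N. h2_norm (\<lambda>k. v m k - v n k) < e"
    proof (intro exI allI impI)
      fix m n assume mn: "m \<ge> N" "n \<ge> N"
      have "inverse (real (Suc n)) \<le> inverse (real (Suc N))" "inverse (real (Suc m)) \<le> inverse (real (Suc N))"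
        using mn by (auto simp: field_simps)
      hence "nsq (\<lambda>k. v m k - v n k) < e\<^sup>2" using cdist[of m n] N by linarith
      hence "(h2_norm (\<lambda>k. v m k - v n k))\<^sup>2 < e\<^sup>2" by (simp add: nsq_norm)
      thus "h2_norm (\<lambda>k. v m k - v n k) < e" using \<open>e > 0\<close> h2_norm_nonneg
        by (meson abs_le_square_iff abs_of_nonneg less_le_not_le power_less_imp_less_base)
    qed
  qed
  then obtain q where qH: "q \<in> H2" and qlim: "(\<lambda>n. h2_norm (\<lambda>k. v n k - q k)) \<longlonglongrightarrow> 0" by blast
  have qV: "q \<in> V" using csubD(5)[OF V vV qH qlim] .
  have eH: "(\<lambda>k. x k - q k) \<in> H2" using H2_diff[OF x qH] .
  have qmin: "h2_norm (\<lambda>k. x k - q k) \<le> d"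
  proof -
    have lim: "(\<lambda>n. eps n + h2_norm (\<lambda>k. v n k - q k)) \<longlonglongrightarrow> sqrt (d\<^sup>2 + 0) + 0"
      unfolding eps_def by (intro tendsto_intros qlim LIMSEQ_inverse_real_of_nat)
    have "h2_norm (\<lambda>k. x k - q k) \<le> eps n + h2_norm (\<lambda>k. v n k - q k)" for n
      using norm_diff_triangle[OF x vH qH, of n] vlt[of n] by linarith
    hence "h2_norm (\<lambda>k. x k - q k) \<le> sqrt (d\<^sup>2 + 0) + 0"
      using LIMSEQ_le_const[OF lim] by blast
    thus ?thesis using d0 by simp
  qed
  have "h2_inner (\<lambda>k. x k - q k) y = 0" if yV: "y \<in> V" for y
  proof (rule ccontr)
    assume a0: "h2_inner (\<lambda>k. x k - q k) y \<noteq> 0"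
    define a where "a = h2_inner (\<lambda>k. x k - q k) y"
    have yH: "y \<in> H2" using yV VH by blast
    define s :: real where "s = 1 / (nsq y + 1)"
    have spos: "s > 0" unfolding s_def using nsq_nonneg[of y] by simp
    have sy: "s * nsq y < 1" unfolding s_def using nsq_nonneg[of y] by (simp add: field_simps)
    define t where "t = complex_of_real s * a"
    have qtV: "(\<lambda>k. q k + t * y k) \<in> V" using csubD(3,4)[OF V] qV yV by blast
    have "d\<^sup>2 \<le> nsq (\<lambda>k. x k - (q k + t * y k))"
      using d_le[OF qtV] d0 unfolding nsq_norm by (meson power_mono)
    also have "(\<lambda>k. x k - (q k + t * y k)) = (\<lambda>k. (x k - q k) - t * y k)" by (auto simp: algebra_simps)
    also have "nsq \<dots> = nsq (\<lambda>k. x k - q k) - 2 * Re (cnj t * a) + (cmod t)\<^sup>2 * nsq y"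
      unfolding a_def by (rule nsq_expand[OF eH yH])
    also have "cnj t * a = complex_of_real (s * (cmod a)\<^sup>2)"
      unfolding t_def by (simp add: complex_norm_square[symmetric] mult.commute mult.left_commute)
    also have "(cmod t)\<^sup>2 = s\<^sup>2 * (cmod a)\<^sup>2"
      unfolding t_def using spos by (simp add: norm_mult power_mult_distrib)
    finally have "d\<^sup>2 \<le> nsq (\<lambda>k. x k - q k) - 2 * (s * (cmod a)\<^sup>2) + s\<^sup>2 * (cmod a)\<^sup>2 * nsq y"
      by simp
    moreover have "nsq (\<lambda>k. x k - q k) \<le> d\<^sup>2"
      unfolding nsq_norm using qmin h2_norm_nonneg by (meson power_mono)
    ultimately have "2 * (s * (cmod a)\<^sup>2) \<le> s\<^sup>2 * (cmod a)\<^sup>2 * nsq y" by linarith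
    hence A: "(2 * s) * (cmod a)\<^sup>2 \<le> (s * (s * nsq y)) * (cmod a)\<^sup>2"
      by (simp add: power2_eq_square mult_ac)
    have "(cmod a)\<^sup>2 > 0" using a0 unfolding a_def by simp
    with A have "2 * s \<le> s * (s * nsq y)" by (rule mult_right_le_imp_le)
    hence "2 \<le> s * nsq y" using spos by simp
    thus False using sy by simp
  qed
  with qV show ?thesis by blast
qed

lemma proj_unique: assumes V: "csub V" and x: "x \<in> H2"
  and q1: "q1 \<in> V" "\<forall>y\<in>V. h2_inner (\<lambda>k. x k - q1 k) y = 0"
  and q2: "q2 \<in> V" "\<forall>y\<in>V. h2_inner (\<lambda>k. x k - q2 k) y = 0"
  shows "q1 = q2"
proof -
  have VH: "V \<subseteq> H2" using csubD[OF V] by blast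
  define D where "D = (\<lambda>k. q1 k - q2 k)"
  have DV: "D \<in> V" unfolding D_def by (rule csub_diff[OF V q1(1) q2(1)])
  have H: "q1 \<in> H2" "q2 \<in> H2" "D \<in> H2" using VH q1 q2 DV by auto
  have "h2_inner (\<lambda>k. (x k - q2 k) - (x k - q1 k)) D = h2_inner (\<lambda>k. x k - q2 k) D - h2_inner (\<lambda>k. x k - q1 k) D"
    by (rule hinner_diff_left) (use H2_diff x H in auto)
  also have "\<dots> = 0" using q1(2) q2(2) DV by simp
  also have "(\<lambda>k. (x k - q2 k) - (x k - q1 k)) = D" unfolding D_def by auto
  finally have "nsq D = 0" using hinner_self[OF H(3)] by simp
  hence "D = (\<lambda>_. 0)" using nsq_eq_0 H(3) by blast
  thus ?thesis unfolding D_def by (metis eq_iff_diff_eq_0 ext)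
qed

lemma proj_prop: assumes V: "csub V" and x: "x \<in> H2"
  shows "proj V x \<in> V" "\<forall>y\<in>V. h2_inner (\<lambda>k. x k - proj V x k) y = 0"
proof -
  obtain q where q: "q \<in> V" "\<forall>y\<in>V. h2_inner (\<lambda>k. x k - q k) y = 0" using proj_exists[OF V x] by blast
  have "proj V x = q" unfolding proj_def
    by (rule the_equality) (use q proj_unique[OF V x] in auto)
  thus "proj V x \<in> V" "\<forall>y\<in>V. h2_inner (\<lambda>k. x k - proj V x k) y = 0" using q by auto
qed

definition toF :: "h2 \<Rightarrow> complex fps fps" where
  "toF a = Abs_fps (\<lambda>m. Abs_fps (\<lambda>n. a (m, n)))"

definition ofF :: "complex fps fps \<Rightarrow> h2" where
  "ofF F = (\<lambda>(m, n). fps_nth (fps_nth F m) n)"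

lemma toF_nth[simp]: "fps_nth (fps_nth (toF a) m) n = a (m, n)"
  by (simp add: toF_def)

lemma ofF_toF[simp]: "ofF (toF a) = a"
  by (auto simp: ofF_def)

lemma toF_ofF[simp]: "toF (ofF F) = F"
  by (simp add: fps_eq_iff ofF_def)

lemma toF_inj: "toF a = toF b \<Longrightarrow> a = b"
  by (metis ofF_toF)

lemma h2_mult_F: "h2_mult a b = ofF (toF a * toF b)"
proof (rule ext, clarify)
  fix m n
  show "h2_mult a b (m, n) = ofF (toF a * toF b) (m, n)"
    by (simp add: h2_mult_def ofF_def fps_mult_nth fps_sum_nth atLeast0AtMost)
qed

lemma toF_mult: "toF (h2_mult a b) = toF a * toF b"
  by (simp add: h2_mult_F)

lemma h2_mult_comm: "h2_mult a b = h2_mult b a"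
  by (simp add: h2_mult_F mult.commute)

lemma h2_mult_assoc: "h2_mult a (h2_mult b c) = h2_mult (h2_mult a b) c"
  by (simp add: h2_mult_F mult.assoc)

lemma toF_add: "toF (\<lambda>k. f k + g k) = toF f + toF g"
  by (simp add: fps_eq_iff)

lemma toF_diff: "toF (\<lambda>k. f k - g k) = toF f - toF g"
  by (simp add: fps_eq_iff)

lemma toF_scale: "toF (\<lambda>k. c * f k) = fps_const (fps_const c) * toF f"
  by (simp add: fps_eq_iff)

lemma toF_zero: "toF (\<lambda>_. 0) = 0"
  by (simp add: fps_eq_iff)

lemma ofF_add: "ofF (F + G) = (\<lambda>k. ofF F k + ofF G k)"
  by (auto simp: ofF_def)

lemma ofF_diff: "ofF (F - G) = (\<lambda>k. ofF F k - ofF G k)"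
  by (auto simp: ofF_def)

definition one2 :: h2 where "one2 = (\<lambda>k. if k = (0, 0) then 1 else 0)"

lemma toF_one2: "toF one2 = 1"
  by (simp add: fps_eq_iff one2_def)

lemma toF_zpoly: "toF zpoly = fps_X"
  by (auto simp: fps_eq_iff zpoly_def fps_X_def)

lemma h2_mult_one: "h2_mult one2 f = f"
  by (simp add: h2_mult_F toF_one2)

lemma h2_mult_add_right: "h2_mult q (\<lambda>k. f k + g k) = (\<lambda>k. h2_mult q f k + h2_mult q g k)"
  by (simp add: h2_mult_F toF_add distrib_left ofF_add)

lemma h2_mult_add_left: "h2_mult (\<lambda>k. f k + g k) q = (\<lambda>k. h2_mult f q k + h2_mult g q k)"
  by (simp add: h2_mult_F toF_add distrib_right ofF_add)

lemma h2_mult_diff_right: "h2_mult q (\<lambda>k. f k - g k) = (\<lambda>k. h2_mult q f k - h2_mult q g k)"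
  by (simp add: h2_mult_F toF_diff right_diff_distrib ofF_diff)

lemma h2_mult_diff_left: "h2_mult (\<lambda>k. f k - g k) q = (\<lambda>k. h2_mult f q k - h2_mult g q k)"
  by (simp add: h2_mult_F toF_diff left_diff_distrib ofF_diff)

lemma h2_mult_scale_right: "h2_mult q (\<lambda>k. c * f k) = (\<lambda>k. c * h2_mult q f k)"
  by (rule ext) (simp add: h2_mult_def sum_distrib_left mult_ac split: prod.split)

lemma h2_mult_zero_right: "h2_mult q (\<lambda>_. 0) = (\<lambda>_. 0)"
  by (rule ext) (simp add: h2_mult_def split: prod.split)

lemma poly2_mult: assumes "a \<in> poly2" "b \<in> poly2" shows "h2_mult a b \<in> poly2"
proof -
  let ?A = "{k. a k \<noteq> 0}" and ?B = "{k. b k \<noteq> 0}"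
  have "{k. h2_mult a b k \<noteq> 0} \<subseteq> (\<lambda>(s, t). (fst s + fst t, snd s + snd t)) ` (?A \<times> ?B)"
  proof
    fix k assume "k \<in> {k. h2_mult a b k \<noteq> 0}"
    then obtain m n where k: "k = (m, n)" and nz: "h2_mult a b (m, n) \<noteq> 0" by (cases k) auto
    then obtain i j where ij: "i \<le> m" "j \<le> n" "a (i, j) * b (m - i, n - j) \<noteq> 0"
      unfolding h2_mult_def by (auto elim!: sum.not_neutral_contains_not_neutral)
    show "k \<in> (\<lambda>(s, t). (fst s + fst t, snd s + snd t)) ` (?A \<times> ?B)"
      using ij k by (intro image_eqI[where x="((i, j), (m - i, n - j))"]) auto
  qed
  moreover have "finite ((\<lambda>(s, t). (fst s + fst t, snd s + snd t)) ` (?A \<times> ?B))"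
    using assms by (simp add: poly2_def)
  ultimately show ?thesis unfolding poly2_def by (auto intro: finite_subset)
qed

lemma one2_poly: "one2 \<in> poly2" by (simp add: poly2_def one2_def)
lemma zpoly_poly: "zpoly \<in> poly2" by (simp add: poly2_def zpoly_def)

definition sh :: "nat \<times> nat \<Rightarrow> h2 \<Rightarrow> h2" where
  "sh s f = (\<lambda>(m, n). if fst s \<le> m \<and> snd s \<le> n then f (m - fst s, n - snd s) else 0)"

lemma sh_has_sum: assumes "f \<in> H2"
  shows "((\<lambda>k. (cmod (sh s f k))\<^sup>2) has_sum nsq f) UNIV"
proof -
  define g where "g = (\<lambda>(m::nat, n::nat). (m + fst s, n + snd s))"
  have inj: "inj_on g UNIV" unfolding g_def by (auto simp: inj_on_def)
  have "((\<lambda>k. (cmod (f k))\<^sup>2) has_sum nsq f) UNIV"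
    unfolding nsq_def using H2_sum[OF assms] by simp
  moreover have "(\<lambda>k. (cmod (f k))\<^sup>2) = (\<lambda>k. (cmod (sh s f k))\<^sup>2) \<circ> g"
    by (auto simp: g_def sh_def)
  ultimately have "((\<lambda>k. (cmod (sh s f k))\<^sup>2) has_sum nsq f) (g ` UNIV)"
    using has_sum_reindex[OF inj, of "\<lambda>k. (cmod (sh s f k))\<^sup>2" "nsq f"] by metis
  moreover have "x \<in> range g" if "sh s f x \<noteq> 0" for x
  proof -
    obtain m n where x: "x = (m, n)" by (cases x)
    with that have "fst s \<le> m" "snd s \<le> n" by (auto simp: sh_def split: if_splits)
    thus ?thesis unfolding x g_def by (intro range_eqI[where x="(m - fst s, n - snd s)"]) auto
  qed
  ultimately show ?thesis
    by (subst has_sum_cong_neutral[where T="range g" and g="\<lambda>k. (cmod (sh s f k))\<^sup>2"]) auto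
qed

lemma sh_H2: "f \<in> H2 \<Longrightarrow> sh s f \<in> H2"
  using sh_has_sum unfolding H2_def summable_on_def by blast

lemma sh_norm: "f \<in> H2 \<Longrightarrow> h2_norm (sh s f) = h2_norm f"
  using sh_has_sum[of f s] by (simp add: h2_norm_nsq nsq_def infsumI)

lemma H2_finsum: assumes "finite S" "\<And>s. s \<in> S \<Longrightarrow> F s \<in> H2"
  shows "(\<lambda>k. \<Sum>s\<in>S. F s k) \<in> H2 \<and> h2_norm (\<lambda>k. \<Sum>s\<in>S. F s k) \<le> (\<Sum>s\<in>S. h2_norm (F s))"
  using assms
proof (induction S rule: finite_induct)
  case empty
  then show ?case by (simp add: H2_zero h2_norm_def)
next
  case (insert x S)
  have a: "F x \<in> H2" and b: "(\<lambda>k. \<Sum>s\<in>S. F s k) \<in> H2"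
    and c: "h2_norm (\<lambda>k. \<Sum>s\<in>S. F s k) \<le> (\<Sum>s\<in>S. h2_norm (F s))" using insert by auto
  have eq: "(\<lambda>k. \<Sum>s\<in>insert x S. F s k) = (\<lambda>k. F x k + (\<Sum>s\<in>S. F s k))"
    using insert by simp
  show ?case unfolding eq using H2_add[OF a b] norm_triangle[OF a b] c insert by simp
qed

definition mconst :: "h2 \<Rightarrow> real" where
  "mconst q = (\<Sum>s\<in>{k. q k \<noteq> 0}. cmod (q s))"

lemma mult_sh: assumes "q \<in> poly2"
  shows "h2_mult q f = (\<lambda>k. \<Sum>s\<in>{k. q k \<noteq> 0}. q s * sh s f k)"
proof (rule ext, clarify)
  fix m n
  let ?S = "{k. q k \<noteq> 0}"
  have fin: "finite ?S" using assms by (simp add: poly2_def)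
  have "h2_mult q f (m, n) = (\<Sum>s\<in>{..m} \<times> {..n}. q s * f (m - fst s, n - snd s))"
    by (simp add: h2_mult_def sum.cartesian_product) (auto intro!: sum.cong)
  also have "\<dots> = (\<Sum>s\<in>{..m} \<times> {..n}. q s * sh s f (m, n))"
    by (rule sum.cong) (auto simp: sh_def)
  also have "\<dots> = (\<Sum>s\<in>({..m} \<times> {..n}) \<inter> ?S. q s * sh s f (m, n))"
    by (rule sum.mono_neutral_right) auto
  also have "\<dots> = (\<Sum>s\<in>?S. q s * sh s f (m, n))"
    by (rule sum.mono_neutral_right[OF fin, symmetric]) (auto simp: sh_def)
  finally show "h2_mult q f (m, n) = (\<Sum>s\<in>?S. q s * sh s f (m, n))" .
qed

lemma mult_H2: assumes "q \<in> poly2" "f \<in> H2"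
  shows "h2_mult q f \<in> H2" "h2_norm (h2_mult q f) \<le> mconst q * h2_norm f"
proof -
  let ?S = "{k. q k \<noteq> 0}"
  have fin: "finite ?S" using assms by (simp add: poly2_def)
  have "\<And>s. s \<in> ?S \<Longrightarrow> (\<lambda>k. q s * sh s f k) \<in> H2" using sh_H2[OF assms(2)] H2_scale by blast
  from H2_finsum[OF fin this]
  have *: "h2_mult q f \<in> H2" "h2_norm (h2_mult q f) \<le> (\<Sum>s\<in>?S. h2_norm (\<lambda>k. q s * sh s f k))"
    by (simp_all add: mult_sh[OF assms(1)])
  show "h2_mult q f \<in> H2" using * by simp
  have "(\<Sum>s\<in>?S. h2_norm (\<lambda>k. q s * sh s f k)) = mconst q * h2_norm f"
    by (simp add: mconst_def norm_scale sh_norm[OF assms(2)] sum_distrib_right)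
  thus "h2_norm (h2_mult q f) \<le> mconst q * h2_norm f" using * by simp
qed

lemma mconst_nonneg: "mconst q \<ge> 0"
  unfolding mconst_def by (simp add: sum_nonneg)

lemma mult_cont: assumes "q \<in> poly2" "\<And>n. x n \<in> H2" "f \<in> H2"
  and lim: "(\<lambda>n. h2_norm (\<lambda>k. x n k - f k)) \<longlonglongrightarrow> 0"
  shows "(\<lambda>n. h2_norm (\<lambda>k. h2_mult q (x n) k - h2_mult q f k)) \<longlonglongrightarrow> 0"
proof (rule Lim_null_comparison[where g="\<lambda>n. mconst q * h2_norm (\<lambda>k. x n k - f k)"])
  show "\<forall>\<^sub>F n in sequentially. norm (h2_norm (\<lambda>k. h2_mult q (x n) k - h2_mult q f k)) \<le> mconst q * h2_norm (\<lambda>k. x n k - f k)"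
  proof (intro always_eventually allI)
    fix n
    have "h2_norm (\<lambda>k. h2_mult q (x n) k - h2_mult q f k) = h2_norm (h2_mult q (\<lambda>k. x n k - f k))"
      by (simp add: h2_mult_diff_right)
    also have "\<dots> \<le> mconst q * h2_norm (\<lambda>k. x n k - f k)"
      by (rule mult_H2(2)[OF assms(1) H2_diff[OF assms(2) assms(3)]])
    finally show "norm (h2_norm (\<lambda>k. h2_mult q (x n) k - h2_mult q f k)) \<le> mconst q * h2_norm (\<lambda>k. x n k - f k)"
      using h2_norm_nonneg by simp
  qed
  show "(\<lambda>n. mconst q * h2_norm (\<lambda>k. x n k - f k)) \<longlonglongrightarrow> 0"
    using tendsto_mult_right_zero[OF lim] by simp
qed

definition trunc :: "nat \<Rightarrow> h2 \<Rightarrow> h2" where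
  "trunc N g = (\<lambda>k. if k \<in> {..N} \<times> {..N} then g k else 0)"

lemma trunc_poly: "trunc N g \<in> poly2"
  unfolding poly2_def trunc_def mem_Collect_eq by (rule finite_subset[of _ "{..N} \<times> {..N}"]) auto

lemma poly_H2: "q \<in> poly2 \<Longrightarrow> q \<in> H2"
  unfolding H2_def poly2_def mem_Collect_eq
  by (rule finite_nonzero_values_imp_summable_on) simp

lemma trunc_H2: "trunc N g \<in> H2"
  using poly_H2[OF trunc_poly] .

lemma box_lim: "filterlim (\<lambda>N::nat. {..N} \<times> {..N}) (finite_subsets_at_top UNIV) sequentially"
  unfolding filterlim_finite_subsets_at_top
proof (intro allI impI)
  fix X :: "(nat \<times> nat) set" assume "finite X \<and> X \<subseteq> UNIV"
  then have fX: "finite X" by simp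
  define M where "M = Max (insert 0 (fst ` X \<union> snd ` X))"
  have "X \<subseteq> {..N} \<times> {..N}" if "N \<ge> M" for N
  proof
    fix x assume "x \<in> X"
    then have "fst x \<le> M" "snd x \<le> M" unfolding M_def using fX by (auto intro!: Max_ge)
    then show "x \<in> {..N} \<times> {..N}" using that by (cases x) auto
  qed
  then show "\<forall>\<^sub>F N in sequentially. finite ({..N} \<times> {..N}) \<and> X \<subseteq> {..N} \<times> {..N} \<and> {..N} \<times> {..N} \<subseteq> UNIV"
    unfolding eventually_sequentially by auto
qed

lemma trunc_lim: assumes g: "g \<in> H2"
  shows "(\<lambda>N. h2_norm (\<lambda>k. trunc N g k - g k)) \<longlonglongrightarrow> 0"
proof -
  let ?f = "\<lambda>k. (cmod (g k))\<^sup>2"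
  have s: "?f summable_on UNIV" using H2_sum[OF g] .
  have eq: "nsq (\<lambda>k. trunc N g k - g k) = nsq g - sum ?f ({..N} \<times> {..N})" for N
  proof -
    let ?B = "{..N} \<times> {..N}"
    let ?h = "\<lambda>k. if k \<in> ?B then 0 else ?f k"
    let ?i = "\<lambda>k. if k \<in> ?B then ?f k else 0"
    have si: "?i summable_on UNIV"
      by (rule finite_nonzero_values_imp_summable_on) (auto elim: finite_subset[rotated, of _ ?B])
    have sh': "?h summable_on UNIV"
      by (rule summable_on_comparison_test[OF s]) auto
    have "nsq g = infsum ?h UNIV + infsum ?i UNIV"
      unfolding nsq_def by (subst infsum_add[OF sh' si, symmetric]) (auto intro!: infsum_cong)
    moreover have "infsum ?i UNIV = sum ?f ?B"
      by (subst infsum_cong_neutral[where T="?B" and g="?f"]) auto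
    moreover have "nsq (\<lambda>k. trunc N g k - g k) = infsum ?h UNIV"
      unfolding nsq_def trunc_def by (rule infsum_cong) auto
    ultimately show ?thesis by simp
  qed
  have "(\<lambda>N. sum ?f ({..N} \<times> {..N})) \<longlonglongrightarrow> nsq g"
    unfolding nsq_def using filterlim_compose[OF infsum_tendsto[OF s] box_lim] by simp
  hence "(\<lambda>N. sqrt (nsq g - sum ?f ({..N} \<times> {..N}))) \<longlonglongrightarrow> sqrt (nsq g - nsq g)"
    by (intro tendsto_intros)
  thus ?thesis unfolding h2_norm_nsq eq by simp
qed

lemma H2_submodule: "is_submodule H2"
  unfolding is_submodule_def using H2_zero H2_add H2_scale mult_H2(1) by blast

lemma submodule_csub: "is_submodule S \<Longrightarrow> csub S"
  unfolding is_submodule_def csub_def by blast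

lemma submoduleD:
  assumes "is_submodule S"
  shows "S \<subseteq> H2" "\<And>q f. q \<in> poly2 \<Longrightarrow> f \<in> S \<Longrightarrow> h2_mult q f \<in> S"
  using assms unfolding is_submodule_def by blast+

lemma gen_submodule_props: assumes "G \<subseteq> H2"
  shows "is_submodule (gen_submodule G)" "G \<subseteq> gen_submodule G"
    "\<And>S. is_submodule S \<Longrightarrow> G \<subseteq> S \<Longrightarrow> gen_submodule G \<subseteq> S"
proof -
  let ?F = "{S. is_submodule S \<and> G \<subseteq> S}"
  have HF: "H2 \<in> ?F" using H2_submodule assms by blast
  show "G \<subseteq> gen_submodule G" unfolding gen_submodule_def by blast
  show "\<And>S. is_submodule S \<Longrightarrow> G \<subseteq> S \<Longrightarrow> gen_submodule G \<subseteq> S"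
    unfolding gen_submodule_def by blast
  show "is_submodule (gen_submodule G)"
    unfolding gen_submodule_def
    unfolding is_submodule_def[of "\<Inter> ?F"]
  proof (intro conjI)
    show "\<Inter> ?F \<subseteq> H2" using HF by blast
    show "(\<lambda>_. 0) \<in> \<Inter> ?F" unfolding is_submodule_def by blast
    show "\<forall>f\<in>\<Inter> ?F. \<forall>g\<in>\<Inter> ?F. (\<lambda>k. f k + g k) \<in> \<Inter> ?F" unfolding is_submodule_def by blast
    show "\<forall>c. \<forall>f\<in>\<Inter> ?F. (\<lambda>k. c * f k) \<in> \<Inter> ?F" unfolding is_submodule_def by blast
    show "\<forall>x f. (\<forall>n. x n \<in> \<Inter> ?F) \<and> f \<in> H2 \<and> (\<lambda>n. h2_norm (\<lambda>k. x n k - f k)) \<longlonglongrightarrow> 0 \<longrightarrow> f \<in> \<Inter> ?F"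
    proof (intro allI impI)
      fix x f assume a: "(\<forall>n. x n \<in> \<Inter> ?F) \<and> f \<in> H2 \<and> (\<lambda>n. h2_norm (\<lambda>k. x n k - f k)) \<longlonglongrightarrow> 0"
      show "f \<in> \<Inter> ?F"
      proof
        fix S assume "S \<in> ?F"
        hence "is_submodule S" "\<forall>n. x n \<in> S" using a by auto
        thus "f \<in> S" using a unfolding is_submodule_def by blast
      qed
    qed
    show "\<forall>q\<in>poly2. \<forall>f\<in>\<Inter> ?F. h2_mult q f \<in> \<Inter> ?F" unfolding is_submodule_def by blast
  qed
qed

lemma ominus_csub: assumes M: "csub M" and NH: "N \<subseteq> H2"
  shows "csub (ominus M N)"
proof -
  have MH: "M \<subseteq> H2" using csubD[OF M] by blast
  show ?thesis unfolding csub_def ominus_def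
  proof (intro conjI)
    show "{x \<in> M. \<forall>y\<in>N. h2_inner x y = 0} \<subseteq> H2" using MH by blast
    show "(\<lambda>_. 0) \<in> {x \<in> M. \<forall>y\<in>N. h2_inner x y = 0}" using csubD(2)[OF M] by simp
    show "\<forall>f\<in>{x \<in> M. \<forall>y\<in>N. h2_inner x y = 0}. \<forall>g\<in>{x \<in> M. \<forall>y\<in>N. h2_inner x y = 0}.
        (\<lambda>k. f k + g k) \<in> {x \<in> M. \<forall>y\<in>N. h2_inner x y = 0}"
    proof (intro ballI, simp, intro conjI ballI)
      fix f g y assume f: "f \<in> M \<and> (\<forall>y\<in>N. h2_inner f y = 0)" and g: "g \<in> M \<and> (\<forall>y\<in>N. h2_inner g y = 0)"
      show "(\<lambda>k. f k + g k) \<in> M" using csubD(3)[OF M] f g by blast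
      assume y: "y \<in> N"
      have "h2_inner (\<lambda>k. f k + g k) y = h2_inner f y + h2_inner g y"
        by (rule hinner_add_left) (use f g y MH NH in auto)
      thus "h2_inner (\<lambda>k. f k + g k) y = 0" using f g y by simp
    qed
    show "\<forall>c. \<forall>f\<in>{x \<in> M. \<forall>y\<in>N. h2_inner x y = 0}. (\<lambda>k. c * f k) \<in> {x \<in> M. \<forall>y\<in>N. h2_inner x y = 0}"
      using csubD(4)[OF M] hinner_scale_left by auto
    show "\<forall>x f. (\<forall>n. x n \<in> {x \<in> M. \<forall>y\<in>N. h2_inner x y = 0}) \<and> f \<in> H2 \<and>
       (\<lambda>n. h2_norm (\<lambda>k. x n k - f k)) \<longlonglongrightarrow> 0 \<longrightarrow> f \<in> {x \<in> M. \<forall>y\<in>N. h2_inner x y = 0}"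
    proof (intro allI impI)
      fix x f assume a: "(\<forall>n. x n \<in> {x \<in> M. \<forall>y\<in>N. h2_inner x y = 0}) \<and> f \<in> H2 \<and>
       (\<lambda>n. h2_norm (\<lambda>k. x n k - f k)) \<longlonglongrightarrow> 0"
      have xM: "\<And>n. x n \<in> M" using a by blast
      have fM: "f \<in> M" by (rule csubD(5)[OF M, of x f]) (use xM a in auto)
      have "h2_inner f y = 0" if "y \<in> N" for y
      proof -
        have "(\<lambda>n. h2_inner (x n) y) \<longlonglongrightarrow> h2_inner f y"
          using inner_cont_left[of x f y] xM MH a that NH by blast
        moreover have "(\<lambda>n. h2_inner (x n) y) = (\<lambda>n. 0)" using a that by auto
        ultimately show ?thesis using LIMSEQ_unique tendsto_const by metis
      qed
      thus "f \<in> {x \<in> M. \<forall>y\<in>N. h2_inner x y = 0}" using fM by blast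
    qed
  qed
qed

text \<open>backward shift = adjoint of multiplication by z\<close>

definition bs :: "h2 \<Rightarrow> h2" where "bs x = (\<lambda>(m, n). x (m + 1, n))"

lemma zmult_sh: "h2_mult zpoly y = sh (1, 0) y"
proof -
  have "{k. zpoly k \<noteq> 0} = {(1, 0)}" by (auto simp: zpoly_def)
  thus ?thesis using mult_sh[OF zpoly_poly, of y] by (simp add: zpoly_def)
qed

lemma bs_H2: assumes "x \<in> H2" shows "bs x \<in> H2"
proof -
  define g where "g = (\<lambda>(m::nat, n::nat). (m + 1, n))"
  have inj: "inj_on g UNIV" unfolding g_def by (auto simp: inj_on_def)
  have "(\<lambda>k. (cmod (x k))\<^sup>2) summable_on (g ` UNIV)"
    using summable_on_subset[OF H2_sum[OF assms]] by blast
  hence "((\<lambda>k. (cmod (x k))\<^sup>2) \<circ> g) summable_on UNIV" using summable_on_reindex[OF inj] by blast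
  moreover have "((\<lambda>k. (cmod (x k))\<^sup>2) \<circ> g) = (\<lambda>k. (cmod (bs x k))\<^sup>2)"
    by (auto simp: g_def bs_def)
  ultimately show ?thesis unfolding H2_def by simp
qed

lemma zmult_adj: assumes "y \<in> H2" "x \<in> H2"
  shows "h2_inner (h2_mult zpoly y) x = h2_inner y (bs x)"
proof -
  define g where "g = (\<lambda>(m::nat, n::nat). (m + 1, n))"
  have inj: "inj_on g UNIV" unfolding g_def by (auto simp: inj_on_def)
  let ?F = "\<lambda>k. sh (1, 0) y k * cnj (x k)"
  have "h2_inner (h2_mult zpoly y) x = infsum ?F UNIV"
    unfolding h2_inner_def zmult_sh ..
  also have "\<dots> = infsum ?F (g ` UNIV)"
  proof (rule infsum_cong_neutral)
    fix k assume "k \<in> UNIV - g ` UNIV"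
    obtain m n where k: "k = (m, n)" by (cases k)
    show "?F k = 0"
    proof (cases "m = 0")
      case True then show ?thesis by (simp add: k sh_def)
    next
      case False
      then have "k = g (m - 1, n)" unfolding k g_def by simp
      then show ?thesis using \<open>k \<in> UNIV - g ` UNIV\<close> by blast
    qed
  qed auto
  also have "\<dots> = infsum (?F \<circ> g) UNIV" by (rule infsum_reindex[OF inj])
  also have "?F \<circ> g = (\<lambda>k. y k * cnj (bs x k))"
    by (auto simp: g_def sh_def bs_def)
  finally show ?thesis unfolding h2_inner_def .
qed

lemma adj_Tz: assumes Q: "csub Q" and x: "x \<in> Q"
  shows "adj Q (Tz Q) x = proj Q (bs x)"
proof -
  have QH: "Q \<subseteq> H2" using csubD[OF Q] by blast
  have xH: "x \<in> H2" using x QH by blast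
  have bxH: "bs x \<in> H2" using bs_H2[OF xH] .
  define u where "u = proj Q (bs x)"
  have uQ: "u \<in> Q" and uorth: "\<forall>y\<in>Q. h2_inner (\<lambda>k. bs x k - u k) y = 0"
    using proj_prop[OF Q bxH] unfolding u_def by auto
  have uH: "u \<in> H2" using uQ QH by blast
  have P: "h2_inner (Tz Q y) x = h2_inner y u" if yQ: "y \<in> Q" for y
  proof -
    have yH: "y \<in> H2" using yQ QH by blast
    have zyH: "h2_mult zpoly y \<in> H2" using mult_H2(1)[OF zpoly_poly yH] .
    define P where "P = proj Q (h2_mult zpoly y)"
    have PQ: "P \<in> Q" and Porth: "\<forall>v\<in>Q. h2_inner (\<lambda>k. h2_mult zpoly y k - P k) v = 0"
      using proj_prop[OF Q zyH] unfolding P_def by auto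
    have PH: "P \<in> H2" using PQ QH by blast
    have "h2_inner (h2_mult zpoly y) x - h2_inner P x = 0"
      using Porth x hinner_diff_left[OF zyH PH xH] by simp
    hence "h2_inner P x = h2_inner (h2_mult zpoly y) x" by simp
    also have "\<dots> = h2_inner y (bs x)" by (rule zmult_adj[OF yH xH])
    also have "h2_inner y (bs x) = h2_inner y u"
    proof -
      have "h2_inner (\<lambda>k. bs x k - u k) y = 0" using uorth yQ by blast
      hence "h2_inner y (\<lambda>k. bs x k - u k) = 0" using hinner_commute[of y "\<lambda>k. bs x k - u k"] by simp
      thus ?thesis using hinner_diff_right[OF bxH uH yH] by simp
    qed
    finally show ?thesis unfolding Tz_def P_def .
  qed
  show ?thesis unfolding adj_def u_def[symmetric]
  proof (rule the_equality)
    show "u \<in> Q \<and> (\<forall>y\<in>Q. h2_inner (Tz Q y) x = h2_inner y u)" using uQ P by blast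
    fix u' assume u': "u' \<in> Q \<and> (\<forall>y\<in>Q. h2_inner (Tz Q y) x = h2_inner y u')"
    have u'H: "u' \<in> H2" using u' QH by blast
    define D where "D = (\<lambda>k. u' k - u k)"
    have DQ: "D \<in> Q" unfolding D_def using csub_diff[OF Q] u' uQ by blast
    have DH: "D \<in> H2" using DQ QH by blast
    have "h2_inner D u' = h2_inner D u" using u' P DQ by metis
    hence "h2_inner D D = 0" unfolding D_def using hinner_diff_right[OF u'H uH, of D] DH
      by (simp add: D_def)
    hence "nsq D = 0" using hinner_self[OF DH] by simp
    hence "D = (\<lambda>_. 0)" using nsq_eq_0[OF DH] by blast
    thus "u' = u" unfolding D_def by (metis eq_iff_diff_eq_0 ext)
  qed
qed

lemma kernel_orth: assumes Q: "csub Q" and x: "x \<in> kernel_on Q (adj Q (Tz Q))"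
  shows "x \<in> Q" "\<forall>y\<in>Q. h2_inner x (h2_mult zpoly y) = 0"
proof -
  have QH: "Q \<subseteq> H2" using csubD[OF Q] by blast
  show xQ: "x \<in> Q" using x unfolding kernel_on_def by blast
  have xH: "x \<in> H2" using xQ QH by blast
  have bxH: "bs x \<in> H2" using bs_H2[OF xH] .
  have "proj Q (bs x) = (\<lambda>_. 0)" using x adj_Tz[OF Q xQ] unfolding kernel_on_def by simp
  hence orth: "\<forall>y\<in>Q. h2_inner (bs x) y = 0" using proj_prop(2)[OF Q bxH] by simp
  show "\<forall>y\<in>Q. h2_inner x (h2_mult zpoly y) = 0"
  proof
    fix y assume yQ: "y \<in> Q"
    have yH: "y \<in> H2" using yQ QH by blast
    have "h2_inner (h2_mult zpoly y) x = h2_inner y (bs x)" by (rule zmult_adj[OF yH xH])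
    also have "\<dots> = cnj (h2_inner (bs x) y)" by (rule hinner_commute)
    also have "\<dots> = 0" using orth yQ by simp
    finally show "h2_inner x (h2_mult zpoly y) = 0" using hinner_commute[of x "h2_mult zpoly y"] by simp
  qed
qed

definition zrow :: "h2 \<Rightarrow> complex poly" where "zrow q = Abs_poly (\<lambda>n. q (0, n))"
definition ztail :: "h2 \<Rightarrow> h2" where "ztail q = (\<lambda>(m, n). q (m + 1, n))"
definition emb :: "complex poly \<Rightarrow> h2" where "emb P = (\<lambda>(m, n). if m = 0 then coeff P n else 0)"
definition wpow :: "nat \<Rightarrow> h2" where "wpow j = (\<lambda>k. if k = (0, j) then 1 else 0)"

lemma coeff_zrow: assumes "q \<in> poly2" shows "coeff (zrow q) n = q (0, n)"
proof -
  have fin: "finite (snd ` {k. q k \<noteq> 0})" using assms by (simp add: poly2_def)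
  define B where "B = Max (insert 0 (snd ` {k. q k \<noteq> 0}))"
  have "q (0, i) = 0" if "i > B" for i
  proof (rule ccontr)
    assume "q (0, i) \<noteq> 0"
    hence "i \<in> insert 0 (snd ` {k. q k \<noteq> 0})" by (auto intro: image_eqI[where x="(0, i)"])
    hence "i \<le> B" unfolding B_def using fin by (intro Max_ge) auto
    thus False using that by simp
  qed
  hence "coeff (Abs_poly (\<lambda>n. q (0, n))) = (\<lambda>n. q (0, n))" by (intro coeff_Abs_poly[of B]) auto
  thus ?thesis unfolding zrow_def by simp
qed

lemma ztail_poly: assumes "q \<in> poly2" shows "ztail q \<in> poly2"
proof -
  have "{k. ztail q k \<noteq> 0} \<subseteq> (\<lambda>(m, n). (m - 1, n)) ` {k. q k \<noteq> 0}"
  proof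
    fix k assume "k \<in> {k. ztail q k \<noteq> 0}"
    then obtain m n where k: "k = (m, n)" "q (m + 1, n) \<noteq> 0" by (cases k) (auto simp: ztail_def)
    thus "k \<in> (\<lambda>(m, n). (m - 1, n)) ` {k. q k \<noteq> 0}" by (auto intro!: image_eqI[where x="(m + 1, n)"])
  qed
  moreover have "finite ((\<lambda>(m, n). (m - 1, n)) ` {k. q k \<noteq> 0})" using assms by (simp add: poly2_def)
  ultimately show ?thesis unfolding poly2_def by (auto intro: finite_subset)
qed

lemma emb_poly: "emb P \<in> poly2"
proof -
  have "{k. emb P k \<noteq> 0} \<subseteq> {0} \<times> {..degree P}"
    by (auto simp: emb_def le_degree split: if_splits)
  thus ?thesis unfolding poly2_def by (auto intro: finite_subset)
qed

lemma wpow_poly: "wpow j \<in> poly2"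
  unfolding poly2_def wpow_def by simp

lemma toF_emb: "toF (emb P) = fps_const (fps_of_poly P)"
  by (auto simp: fps_eq_iff emb_def)

lemma toF_split: assumes "q \<in> poly2"
  shows "toF q = fps_const (fps_of_poly (zrow q)) + fps_X * toF (ztail q)"
proof (subst fps_eq_iff, intro allI)
  fix m
  show "fps_nth (toF q) m = fps_nth (fps_const (fps_of_poly (zrow q)) + fps_X * toF (ztail q)) m"
  proof (cases m)
    case 0
    then show ?thesis by (auto simp: fps_eq_iff coeff_zrow[OF assms])
  next
    case (Suc m')
    then show ?thesis by (auto simp: fps_eq_iff ztail_def)
  qed
qed

lemma ring_id:
  fixes q c0 X q1 s p0 r p p1 f :: "'a::comm_ring"
  assumes "q = c0 + X * q1" "c0 = s * p0 + r" "p0 = p - X * p1"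
  shows "q * f = X * (q1 * f) + p * (s * f) - X * ((s * p1) * f) + r * f"
proof -
  have "q * f = ((s * (p - X * p1) + r) + X * q1) * f" using assms by simp
  also have "\<dots> = X * (q1 * f) + p * (s * f) - X * ((s * p1) * f) + r * f" by (simp add: algebra_simps)
  finally show ?thesis .
qed

lemma decomp: assumes q: "q \<in> poly2" and p: "p \<in> poly2"
  defines "S \<equiv> zrow q div zrow p" and "R \<equiv> zrow q mod zrow p"
  shows "h2_mult q f = (\<lambda>k. h2_mult zpoly (h2_mult (ztail q) f) k + h2_mult p (h2_mult (emb S) f) k
      - h2_mult zpoly (h2_mult (h2_mult (emb S) (ztail p)) f) k + h2_mult (emb R) f k)"
proof (rule toF_inj)
  have c0: "fps_const (fps_of_poly (zrow q)) = toF (emb S) * toF (emb (zrow p)) + toF (emb R)"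
  proof -
    have "zrow q = S * zrow p + R" unfolding S_def R_def by simp
    hence "fps_of_poly (zrow q) = fps_of_poly S * fps_of_poly (zrow p) + fps_of_poly R"
      by (simp add: fps_of_poly_mult fps_of_poly_add)
    thus ?thesis by (simp add: toF_emb fps_const_add)
  qed
  have p0: "toF (emb (zrow p)) = toF p - fps_X * toF (ztail p)"
    using toF_split[OF p] by (simp add: toF_emb)
  show "toF (h2_mult q f) = toF (\<lambda>k. h2_mult zpoly (h2_mult (ztail q) f) k + h2_mult p (h2_mult (emb S) f) k
      - h2_mult zpoly (h2_mult (h2_mult (emb S) (ztail p)) f) k + h2_mult (emb R) f k)"
    unfolding toF_add toF_diff toF_mult toF_zpoly
    by (rule ring_id[OF toF_split[OF q] c0 p0])
qed

lemma h2_mult_scale_left: "h2_mult (\<lambda>k. c * w k) f = (\<lambda>k. c * h2_mult w f k)"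
  using h2_mult_scale_right[of f c w] h2_mult_comm by metis

lemma h2_mult_sum_left: assumes "finite J"
  shows "h2_mult (\<lambda>k. \<Sum>j\<in>J. c j * w j k) f = (\<lambda>k. \<Sum>j\<in>J. c j * h2_mult (w j) f k)"
  using assms
proof (induction J rule: finite_induct)
  case empty
  then show ?case using h2_mult_zero_right[of f] h2_mult_comm by simp
next
  case (insert a J)
  have "h2_mult (\<lambda>k. \<Sum>j\<in>insert a J. c j * w j k) f = h2_mult (\<lambda>k. c a * w a k + (\<Sum>j\<in>J. c j * w j k)) f"
    using insert by simp
  also have "\<dots> = (\<lambda>k. h2_mult (\<lambda>k. c a * w a k) f k + h2_mult (\<lambda>k. \<Sum>j\<in>J. c j * w j k) f k)"
    by (rule h2_mult_add_left)
  also have "\<dots> = (\<lambda>k. \<Sum>j\<in>insert a J. c j * h2_mult (w j) f k)"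
    using insert by (simp add: h2_mult_scale_left)
  finally show ?case .
qed

lemma inner_sum_right: assumes "finite J" "\<And>j. j \<in> J \<Longrightarrow> g j \<in> H2" "x \<in> H2"
  shows "h2_inner x (\<lambda>k. \<Sum>j\<in>J. c j * g j k) = (\<Sum>j\<in>J. cnj (c j) * h2_inner x (g j))"
  using assms
proof (induction J rule: finite_induct)
  case empty
  then show ?case by simp
next
  case (insert a J)
  have H1: "(\<lambda>k. c a * g a k) \<in> H2" using insert H2_scale by blast
  have H2': "(\<lambda>k. \<Sum>j\<in>J. c j * g j k) \<in> H2" using H2_finsum[of J "\<lambda>j k. c j * g j k"] insert H2_scale by blast
  have "h2_inner x (\<lambda>k. \<Sum>j\<in>insert a J. c j * g j k) = h2_inner x (\<lambda>k. c a * g a k + (\<Sum>j\<in>J. c j * g j k))"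
    using insert by simp
  also have "\<dots> = h2_inner x (\<lambda>k. c a * g a k) + h2_inner x (\<lambda>k. \<Sum>j\<in>J. c j * g j k)"
    by (rule hinner_add_right[OF H1 H2' insert.prems(2)])
  also have "\<dots> = (\<Sum>j\<in>insert a J. cnj (c j) * h2_inner x (g j))"
    using insert by (simp add: hinner_scale_right)
  finally show ?case .
qed

lemma emb_low: assumes "\<And>j. j \<ge> d \<Longrightarrow> coeff R j = 0"
  shows "emb R = (\<lambda>k. \<Sum>j\<in>{..<d}. coeff R j * wpow j k)"
proof (rule ext, clarify)
  fix m n
  have "(\<Sum>j\<in>{..<d}. coeff R j * wpow j (m, n)) = (\<Sum>j\<in>{..<d}. if j = n then (if m = 0 then coeff R j else 0) else 0)"
    by (rule sum.cong) (auto simp: wpow_def)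
  also have "\<dots> = (if n < d then (if m = 0 then coeff R n else 0) else 0)"
    by (simp add: sum.delta)
  also have "\<dots> = emb R (m, n)" using assms by (auto simp: emb_def)
  finally show "emb R (m, n) = (\<Sum>j\<in>{..<d}. coeff R j * wpow j (m, n))" by simp
qed

lemma density_N: assumes Nsub: "is_submodule N" and p: "p \<in> poly2" and pN: "p \<in> N" and g: "g \<in> H2"
  shows "h2_mult p g \<in> N"
proof -
  have NC: "csub N" using submodule_csub[OF Nsub] .
  have tN: "h2_mult p (trunc n g) \<in> N" for n
    using submoduleD(2)[OF Nsub trunc_poly pN] h2_mult_comm by metis
  have "(\<lambda>n. h2_norm (\<lambda>k. h2_mult p (trunc n g) k - h2_mult p g k)) \<longlonglongrightarrow> 0"
    by (rule mult_cont[OF p trunc_H2 g trunc_lim[OF g]])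
  thus ?thesis using csubD(5)[OF NC, of "\<lambda>n. h2_mult p (trunc n g)" "h2_mult p g"] tN mult_H2(1)[OF p g]
    by blast
qed

lemma key_inj:
  assumes p: "p \<in> poly2" and P0: "zrow p \<noteq> 0"
    and fs: "set fs \<subseteq> H2"
    and xM: "x \<in> gen_submodule (insert p (set fs))"
    and xN: "\<forall>y\<in>gen_submodule {p}. h2_inner x y = 0"
    and xz: "\<forall>m\<in>gen_submodule (insert p (set fs)). h2_inner x (h2_mult zpoly m) = 0"
    and xF: "\<forall>f\<in>set fs. \<forall>j<degree (zrow p). h2_inner x (h2_mult (wpow j) f) = 0"
  shows "x = (\<lambda>_. 0)"
proof -
  define M where "M = gen_submodule (insert p (set fs))"
  define N where "N = gen_submodule {p}"
  define d where "d = degree (zrow p)"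
  have pH: "p \<in> H2" using poly_H2[OF p] .
  have GH: "insert p (set fs) \<subseteq> H2" using pH fs by blast
  have Msub: "is_submodule M" and GM: "insert p (set fs) \<subseteq> M"
    using gen_submodule_props[OF GH] unfolding M_def by auto
  have Nsub: "is_submodule N" and pN: "p \<in> N"
    using gen_submodule_props[of "{p}"] pH unfolding N_def by auto
  have MH: "M \<subseteq> H2" using submoduleD(1)[OF Msub] .
  have NH: "N \<subseteq> H2" using submoduleD(1)[OF Nsub] .
  have xH: "x \<in> H2" using xM MH unfolding M_def by blast
  have xN': "\<And>y. y \<in> N \<Longrightarrow> h2_inner x y = 0" using xN unfolding N_def by blast
  have xz': "\<And>m. m \<in> M \<Longrightarrow> h2_inner x (h2_mult zpoly m) = 0" using xz unfolding M_def by blast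
  have claim: "h2_inner x (h2_mult q f) = 0" if f: "f \<in> set fs" and q: "q \<in> poly2" for f q
  proof -
    define S where "S = zrow q div zrow p"
    define R where "R = zrow q mod zrow p"
    have fM: "f \<in> M" using GM f by blast
    have fH: "f \<in> H2" using fs f by blast
    define T1 where "T1 = h2_mult zpoly (h2_mult (ztail q) f)"
    define T2 where "T2 = h2_mult p (h2_mult (emb S) f)"
    define T3 where "T3 = h2_mult zpoly (h2_mult (h2_mult (emb S) (ztail p)) f)"
    define T4 where "T4 = h2_mult (emb R) f"
    have dec: "h2_mult q f = (\<lambda>k. T1 k + T2 k - T3 k + T4 k)"
      unfolding T1_def T2_def T3_def T4_def S_def R_def by (rule decomp[OF q p])
    have m1: "h2_mult (ztail q) f \<in> M" using submoduleD(2)[OF Msub ztail_poly[OF q] fM] .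
    have m3: "h2_mult (h2_mult (emb S) (ztail p)) f \<in> M"
      using submoduleD(2)[OF Msub poly2_mult[OF emb_poly ztail_poly[OF p]] fM] .
    have g2: "h2_mult (emb S) f \<in> H2" using mult_H2(1)[OF emb_poly fH] .
    have H1: "T1 \<in> H2" unfolding T1_def using mult_H2(1)[OF zpoly_poly] m1 MH by blast
    have H2': "T2 \<in> H2" unfolding T2_def using mult_H2(1)[OF p g2] .
    have H3: "T3 \<in> H2" unfolding T3_def using mult_H2(1)[OF zpoly_poly] m3 MH by blast
    have H4: "T4 \<in> H2" unfolding T4_def using mult_H2(1)[OF emb_poly fH] .
    have i1: "h2_inner x T1 = 0" unfolding T1_def using xz' m1 by blast
    have i2: "h2_inner x T2 = 0" unfolding T2_def using xN' density_N[OF Nsub p pN g2] by blast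
    have i3: "h2_inner x T3 = 0" unfolding T3_def using xz' m3 by blast
    have i4: "h2_inner x T4 = 0"
    proof -
      have low: "coeff R j = 0" if "j \<ge> d" for j
      proof (cases "R = 0")
        case False
        then have "degree R < d" using degree_mod_less[OF P0, of "zrow q"] unfolding R_def d_def by auto
        then show ?thesis using that by (intro coeff_eq_0) simp
      qed simp
      have "T4 = h2_mult (\<lambda>k. \<Sum>j\<in>{..<d}. coeff R j * wpow j k) f"
        unfolding T4_def using emb_low[OF low] by simp
      also have "\<dots> = (\<lambda>k. \<Sum>j\<in>{..<d}. coeff R j * h2_mult (wpow j) f k)"
        by (rule h2_mult_sum_left) simp
      finally have "h2_inner x T4 = (\<Sum>j\<in>{..<d}. cnj (coeff R j) * h2_inner x (h2_mult (wpow j) f))"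
        using inner_sum_right[of "{..<d}" "\<lambda>j. h2_mult (wpow j) f" x "\<lambda>j. coeff R j"]
          mult_H2(1)[OF wpow_poly fH] xH by simp
      also have "\<dots> = 0" using xF f unfolding d_def by simp
      finally show ?thesis .
    qed
    have "h2_inner x (h2_mult q f) = h2_inner x (\<lambda>k. T1 k + T2 k - T3 k + T4 k)" using dec by simp
    also have "\<dots> = h2_inner x (\<lambda>k. T1 k + T2 k - T3 k) + h2_inner x T4"
      by (rule hinner_add_right) (use H1 H2' H3 H4 xH H2_add H2_diff in auto)
    also have "h2_inner x (\<lambda>k. T1 k + T2 k - T3 k) = h2_inner x (\<lambda>k. T1 k + T2 k) - h2_inner x T3"
      by (rule hinner_diff_right) (use H1 H2' H3 xH H2_add in auto)
    also have "h2_inner x (\<lambda>k. T1 k + T2 k) = h2_inner x T1 + h2_inner x T2"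
      by (rule hinner_add_right) (use H1 H2' xH in auto)
    finally show ?thesis using i1 i2 i3 i4 by simp
  qed
  define SS where "SS = {y \<in> H2. \<forall>q\<in>poly2. h2_inner x (h2_mult q y) = 0}"
  have SSsub: "is_submodule SS"
    unfolding is_submodule_def
  proof (intro conjI)
    show "SS \<subseteq> H2" unfolding SS_def by blast
    show "(\<lambda>_. 0) \<in> SS" unfolding SS_def using H2_zero by (simp add: h2_mult_zero_right)
    show "\<forall>f\<in>SS. \<forall>g\<in>SS. (\<lambda>k. f k + g k) \<in> SS"
    proof (intro ballI)
      fix f g assume f: "f \<in> SS" and g: "g \<in> SS"
      have fH: "f \<in> H2" and gH: "g \<in> H2" using f g unfolding SS_def by auto
      have "h2_inner x (h2_mult q (\<lambda>k. f k + g k)) = 0" if q: "q \<in> poly2" for q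
      proof -
        have "h2_inner x (h2_mult q (\<lambda>k. f k + g k)) = h2_inner x (h2_mult q f) + h2_inner x (h2_mult q g)"
          unfolding h2_mult_add_right by (rule hinner_add_right[OF mult_H2(1)[OF q fH] mult_H2(1)[OF q gH] xH])
        thus ?thesis using f g q unfolding SS_def by simp
      qed
      thus "(\<lambda>k. f k + g k) \<in> SS" unfolding SS_def using H2_add[OF fH gH] by blast
    qed
    show "\<forall>c. \<forall>f\<in>SS. (\<lambda>k. c * f k) \<in> SS"
      unfolding SS_def using H2_scale by (auto simp: h2_mult_scale_right hinner_scale_right)
    show "\<forall>y f. (\<forall>n. y n \<in> SS) \<and> f \<in> H2 \<and> (\<lambda>n. h2_norm (\<lambda>k. y n k - f k)) \<longlonglongrightarrow> 0 \<longrightarrow> f \<in> SS"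
    proof (intro allI impI)
      fix y f assume a: "(\<forall>n. y n \<in> SS) \<and> f \<in> H2 \<and> (\<lambda>n. h2_norm (\<lambda>k. y n k - f k)) \<longlonglongrightarrow> 0"
      have yH: "\<And>n. y n \<in> H2" using a unfolding SS_def by blast
      have fH: "f \<in> H2" using a by blast
      have "h2_inner x (h2_mult q f) = 0" if q: "q \<in> poly2" for q
      proof -
        have "(\<lambda>n. h2_inner x (h2_mult q (y n))) \<longlonglongrightarrow> h2_inner x (h2_mult q f)"
          by (rule inner_cont_right[OF mult_H2(1)[OF q yH] mult_H2(1)[OF q fH] xH])
             (rule mult_cont[OF q yH fH], use a in blast)
        moreover have "(\<lambda>n. h2_inner x (h2_mult q (y n))) = (\<lambda>n. 0)" using a q unfolding SS_def by auto
        ultimately show ?thesis using LIMSEQ_unique tendsto_const by metis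
      qed
      thus "f \<in> SS" unfolding SS_def using fH by blast
    qed
    show "\<forall>q\<in>poly2. \<forall>f\<in>SS. h2_mult q f \<in> SS"
    proof (intro ballI)
      fix q f assume q: "q \<in> poly2" and f: "f \<in> SS"
      have fH: "f \<in> H2" using f unfolding SS_def by blast
      have "h2_inner x (h2_mult q' (h2_mult q f)) = 0" if q': "q' \<in> poly2" for q'
        using f poly2_mult[OF q' q] unfolding SS_def h2_mult_assoc by blast
      thus "h2_mult q f \<in> SS" unfolding SS_def using mult_H2(1)[OF q fH] by blast
    qed
  qed
  have GSS: "insert p (set fs) \<subseteq> SS"
  proof
    fix g assume "g \<in> insert p (set fs)"
    then show "g \<in> SS"
    proof
      assume gp: "g = p"
      have "h2_inner x (h2_mult q p) = 0" if "q \<in> poly2" for q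
        using xN' submoduleD(2)[OF Nsub that pN] by blast
      thus "g \<in> SS" unfolding SS_def gp using pH by blast
    next
      assume "g \<in> set fs"
      thus "g \<in> SS" unfolding SS_def using claim fs by blast
    qed
  qed
  have "M \<subseteq> SS" unfolding M_def by (rule gen_submodule_props(3)[OF GH SSsub GSS])
  hence "x \<in> SS" using xM unfolding M_def by blast
  hence "h2_inner x (h2_mult one2 x) = 0" unfolding SS_def using one2_poly by blast
  hence "nsq x = 0" using hinner_self[OF xH] h2_mult_one by simp
  thus ?thesis using nsq_eq_0[OF xH] by blast
qed

lemma fd_lemma:
  assumes "finite G" "G \<subseteq> H2"
  shows "\<And>V. V \<subseteq> H2 \<Longrightarrow> (\<forall>f\<in>V. \<forall>g\<in>V. (\<lambda>k. f k + g k) \<in> V) \<Longrightarrow> (\<forall>c. \<forall>f\<in>V. (\<lambda>k. c * f k) \<in> V)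
    \<Longrightarrow> (\<forall>x\<in>V. (\<forall>g\<in>G. h2_inner x g = 0) \<longrightarrow> x = (\<lambda>_. 0)) \<Longrightarrow> fin_dim V"
  using assms
proof (induction G rule: finite_induct)
  case (empty V)
  then show ?case unfolding fin_dim_def by (intro exI[of _ "{}"]) auto
next
  case (insert g G V)
  have gH: "g \<in> H2" and GH: "G \<subseteq> H2" using insert.prems by auto
  show ?case
  proof (cases "\<forall>x\<in>V. h2_inner x g = 0")
    case True
    then show ?thesis using insert.IH[OF insert.prems(1-3) _ GH] insert.prems(4) by blast
  next
    case False
    then obtain v where vV: "v \<in> V" and vg: "h2_inner v g \<noteq> 0" by blast
    define V' where "V' = {x \<in> V. h2_inner x g = 0}"
    have VH: "V \<subseteq> H2" using insert.prems by blast
    have fd': "fin_dim V'"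
    proof (rule insert.IH[OF _ _ _ _ GH])
      show "V' \<subseteq> H2" using VH unfolding V'_def by blast
      show "\<forall>f\<in>V'. \<forall>h\<in>V'. (\<lambda>k. f k + h k) \<in> V'"
      proof (intro ballI)
        fix f h assume f: "f \<in> V'" and h: "h \<in> V'"
        have fH: "f \<in> H2" and hH: "h \<in> H2" using f h VH unfolding V'_def by auto
        have "h2_inner (\<lambda>k. f k + h k) g = h2_inner f g + h2_inner h g"
          by (rule hinner_add_left[OF fH hH gH])
        thus "(\<lambda>k. f k + h k) \<in> V'" using f h insert.prems(2) unfolding V'_def by auto
      qed
      show "\<forall>c. \<forall>f\<in>V'. (\<lambda>k. c * f k) \<in> V'"
        unfolding V'_def using insert.prems(3) hinner_scale_left by auto
      show "\<forall>x\<in>V'. (\<forall>g\<in>G. h2_inner x g = 0) \<longrightarrow> x = (\<lambda>_. 0)"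
        unfolding V'_def using insert.prems(4) by auto
    qed
    then obtain B where B: "finite B" "\<forall>x\<in>V'. \<exists>c. x = (\<lambda>k. \<Sum>b\<in>B. c b * b k)"
      unfolding fin_dim_def by blast
    show ?thesis unfolding fin_dim_def
    proof (intro exI[of _ "insert v B"] conjI ballI)
      show "finite (insert v B)" using B by simp
      fix x assume xV: "x \<in> V"
      define t where "t = h2_inner x g / h2_inner v g"
      define x' where "x' = (\<lambda>k. x k + (- t) * v k)"
      have "(\<lambda>k. (- t) * v k) \<in> V" using insert.prems(3) vV by blast
      hence x'V: "x' \<in> V" unfolding x'_def by (rule insert.prems(2)[rule_format, OF xV])
      have xH: "x \<in> H2" and vH: "v \<in> H2" using xV vV VH by auto
      have sH: "(\<lambda>k. (- t) * v k) \<in> H2" by (rule H2_scale[OF vH])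
      have "h2_inner x' g = h2_inner x g + h2_inner (\<lambda>k. (- t) * v k) g"
        unfolding x'_def by (rule hinner_add_left[OF xH sH gH])
      also have "h2_inner (\<lambda>k. (- t) * v k) g = (- t) * h2_inner v g" by (rule hinner_scale_left)
      also have "h2_inner x g + (- t) * h2_inner v g = 0" unfolding t_def using vg by simp
      finally have "x' \<in> V'" unfolding V'_def using x'V by blast
      then obtain c where c: "x' = (\<lambda>k. \<Sum>b\<in>B. c b * b k)" using B by blast
      define c' where "c' b = (if b \<in> B then c b else 0) + (if b = v then t else 0)" for b
      have "x = (\<lambda>k. \<Sum>b\<in>insert v B. c' b * b k)"
      proof
        fix k
        have "(\<Sum>b\<in>insert v B. c' b * b k) = (\<Sum>b\<in>insert v B. (if b \<in> B then c b * b k else 0))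
               + (\<Sum>b\<in>insert v B. (if b = v then t * b k else 0))"
        proof -
          have "(\<Sum>b\<in>insert v B. c' b * b k) = (\<Sum>b\<in>insert v B. (if b \<in> B then c b * b k else 0) + (if b = v then t * b k else 0))"
            by (rule sum.cong) (auto simp: c'_def distrib_right)
          also have "\<dots> = (\<Sum>b\<in>insert v B. (if b \<in> B then c b * b k else 0))
               + (\<Sum>b\<in>insert v B. (if b = v then t * b k else 0))" by (rule sum.distrib)
          finally show ?thesis .
        qed
        also have "(\<Sum>b\<in>insert v B. (if b \<in> B then c b * b k else 0)) = (\<Sum>b\<in>B. c b * b k)"
          using B(1) by (simp add: sum.inter_restrict[symmetric] Int_absorb1 subset_insertI)
        also have "(\<Sum>b\<in>insert v B. (if b = v then t * b k else 0)) = t * v k"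
          using B(1) by (simp add: sum.delta)
        also have "(\<Sum>b\<in>B. c b * b k) = x' k" using c by simp
        finally show "x k = (\<Sum>b\<in>insert v B. c' b * b k)" unfolding x'_def by simp
      qed
      thus "\<exists>c. x = (\<lambda>k. \<Sum>b\<in>insert v B. c b * b k)" by blast
    qed
  qed
qed

lemma fin_dim_mono: "fin_dim K \<Longrightarrow> A \<subseteq> K \<Longrightarrow> fin_dim A"
  unfolding fin_dim_def by blast

lemma frontier_pt: "((0::complex), (1::complex)) \<in> frontier bidisc"
proof -
  have n1: "((0::complex), (1::complex)) \<notin> bidisc" unfolding bidisc_def by simp
  have nin: "((0::complex), (1::complex)) \<notin> interior bidisc"
    using interior_subset[of bidisc] n1 by blast
  define s where "s n = ((0::complex), complex_of_real (1 - inverse (real (Suc n)) / 2))" for n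
  have sin: "s n \<in> bidisc" for n
  proof -
    define r where "r = 1 - inverse (real (Suc n)) / 2"
    have i0: "0 < inverse (real (Suc n))" by simp
    have i1: "inverse (real (Suc n)) \<le> 1" by (rule inverse_le_1_iff[THEN iffD2]) simp
    have "0 < r" "r < 1" unfolding r_def using i0 i1 by linarith+
    hence "cmod (complex_of_real r) < 1" by simp
    thus ?thesis unfolding s_def bidisc_def r_def by simp
  qed
  have "s \<longlonglongrightarrow> ((0::complex), complex_of_real (1 - 0 / 2))"
    unfolding s_def by (intro tendsto_intros LIMSEQ_inverse_real_of_nat) simp_all
  hence lim: "s \<longlonglongrightarrow> ((0::complex), (1::complex))" by simp
  have "((0::complex), (1::complex)) \<in> closure bidisc"
    unfolding closure_sequential using sin lim by blast
  thus ?thesis using nin unfolding frontier_def by blast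
qed

lemma zrow_nonzero: assumes p: "p \<in> poly2"
  and hyp: "Zset p \<inter> {zw. fst zw = 0} \<inter> frontier bidisc = {}"
  shows "zrow p \<noteq> 0"
proof
  assume z: "zrow p = 0"
  have "(0::complex, 1::complex) \<notin> Zset p"
  proof
    assume "(0::complex, 1::complex) \<in> Zset p"
    hence "(0::complex, 1::complex) \<in> Zset p \<inter> {zw. fst zw = 0} \<inter> frontier bidisc"
      using frontier_pt by simp
    thus False using hyp by blast
  qed
  hence ne: "poly2_eval p (0, 1) \<noteq> 0" unfolding Zset_def by simp
  have "p k * fst (0::complex, 1::complex) ^ fst k * snd (0::complex, 1::complex) ^ snd k = 0" for k
  proof -
    obtain a b where k: "k = (a, b)" by (cases k)
    show ?thesis
    proof (cases "a = 0")
      case True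
      have "p (0, b) = coeff (zrow p) b" using coeff_zrow[OF p, of b] by simp
      also have "\<dots> = 0" using z by simp
      finally show ?thesis using k True by simp
    next
      case False
      then show ?thesis using k by simp
    qed
  qed
  hence "poly2_eval p (0, 1) = 0" unfolding poly2_eval_def by (intro sum.neutral) blast
  with ne show False by contradiction
qed

theorem lemma4p1:
  fixes p :: h2 and fs :: "h2 list"
  assumes "p \<in> poly2"
    and "set fs \<subseteq> H2"
    and "Zset p \<inter> {zw. fst zw = 0} \<inter> frontier bidisc = {}"
  shows "fin_dim (kernel_on
           (ominus (gen_submodule (insert p (set fs))) (gen_submodule {p}))
           (adj (ominus (gen_submodule (insert p (set fs))) (gen_submodule {p}))
                (Tz (ominus (gen_submodule (insert p (set fs))) (gen_submodule {p})))))"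
proof -
  define M where "M = gen_submodule (insert p (set fs))"
  define N where "N = gen_submodule {p}"
  define Q where "Q = ominus M N"
  have p: "p \<in> poly2" using assms(1) .
  have pH: "p \<in> H2" using poly_H2[OF p] .
  have GH: "insert p (set fs) \<subseteq> H2" using pH assms(2) by blast
  have Msub: "is_submodule M" and GM: "insert p (set fs) \<subseteq> M"
    using gen_submodule_props[OF GH] unfolding M_def by auto
  have Nsub: "is_submodule N" and pN: "p \<in> N"
    using gen_submodule_props[of "{p}"] pH unfolding N_def by auto
  have NM: "N \<subseteq> M" unfolding N_def using gen_submodule_props(3)[of "{p}" M] pH Msub GM by blast
  have MH: "M \<subseteq> H2" using submoduleD(1)[OF Msub] .
  have NH: "N \<subseteq> H2" using submoduleD(1)[OF Nsub] .
  have Mc: "csub M" using submodule_csub[OF Msub] .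
  have Nc: "csub N" using submodule_csub[OF Nsub] .
  have Qc: "csub Q" unfolding Q_def by (rule ominus_csub[OF Mc NH])
  define K where "K = {x \<in> M. (\<forall>y\<in>N. h2_inner x y = 0) \<and> (\<forall>m\<in>M. h2_inner x (h2_mult zpoly m) = 0)}"
  have kerK: "kernel_on Q (adj Q (Tz Q)) \<subseteq> K"
  proof
    fix x assume x: "x \<in> kernel_on Q (adj Q (Tz Q))"
    have xQ: "x \<in> Q" and xz: "\<forall>y\<in>Q. h2_inner x (h2_mult zpoly y) = 0"
      using kernel_orth[OF Qc x] by auto
    have xM: "x \<in> M" and xN: "\<forall>y\<in>N. h2_inner x y = 0" using xQ unfolding Q_def ominus_def by auto
    have xH: "x \<in> H2" using xM MH by blast
    have "h2_inner x (h2_mult zpoly m) = 0" if mM: "m \<in> M" for m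
    proof -
      have mH: "m \<in> H2" using mM MH by blast
      define P where "P = proj N m"
      have PN: "P \<in> N" and Porth: "\<forall>y\<in>N. h2_inner (\<lambda>k. m k - P k) y = 0"
        using proj_prop[OF Nc mH] unfolding P_def by auto
      have PH: "P \<in> H2" using PN NH by blast
      have dQ: "(\<lambda>k. m k - P k) \<in> Q" unfolding Q_def ominus_def
        using csub_diff[OF Mc mM] PN NM Porth by blast
      have dH: "(\<lambda>k. m k - P k) \<in> H2" using H2_diff[OF mH PH] .
      have "m = (\<lambda>k. (m k - P k) + P k)" by simp
      hence "h2_mult zpoly m = (\<lambda>k. h2_mult zpoly (\<lambda>k. m k - P k) k + h2_mult zpoly P k)"
        by (metis h2_mult_add_right)
      hence "h2_inner x (h2_mult zpoly m) = h2_inner x (h2_mult zpoly (\<lambda>k. m k - P k)) + h2_inner x (h2_mult zpoly P)"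
        using hinner_add_right[OF mult_H2(1)[OF zpoly_poly dH] mult_H2(1)[OF zpoly_poly PH] xH] by simp
      also have "\<dots> = 0"
        using xz dQ xN submoduleD(2)[OF Nsub zpoly_poly PN] by simp
      finally show ?thesis .
    qed
    thus "x \<in> K" unfolding K_def using xM xN by blast
  qed
  define d where "d = degree (zrow p)"
  define GG where "GG = (\<lambda>(j, f). h2_mult (wpow j) f) ` ({..<d} \<times> set fs)"
  have fK: "fin_dim K"
  proof (rule fd_lemma)
    show "finite GG" unfolding GG_def by simp
    show "GG \<subseteq> H2" unfolding GG_def using mult_H2(1)[OF wpow_poly] assms(2) by auto
    show "K \<subseteq> H2" unfolding K_def using MH by blast
    show "\<forall>f\<in>K. \<forall>g\<in>K. (\<lambda>k. f k + g k) \<in> K"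
    proof (intro ballI)
      fix f g assume f: "f \<in> K" and g: "g \<in> K"
      have fH: "f \<in> H2" and gH: "g \<in> H2" using f g MH unfolding K_def by auto
      have fM: "f \<in> M" and gM: "g \<in> M" using f g unfolding K_def by auto
      have a: "h2_inner (\<lambda>k. f k + g k) y = 0" if "y \<in> N" for y
        using hinner_add_left[OF fH gH, of y] that NH f g unfolding K_def by auto
      have b: "h2_inner (\<lambda>k. f k + g k) (h2_mult zpoly m) = 0" if "m \<in> M" for m
        using hinner_add_left[OF fH gH mult_H2(1)[OF zpoly_poly, of m]] that MH f g unfolding K_def by auto
      show "(\<lambda>k. f k + g k) \<in> K"
        unfolding K_def using csubD(3)[OF Mc fM gM] a b by blast
    qed
    show "\<forall>c. \<forall>f\<in>K. (\<lambda>k. c * f k) \<in> K"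
      unfolding K_def using csubD(4)[OF Mc] hinner_scale_left by auto
    show "\<forall>x\<in>K. (\<forall>g\<in>GG. h2_inner x g = 0) \<longrightarrow> x = (\<lambda>_. 0)"
    proof (intro ballI impI)
      fix x assume xK: "x \<in> K" and xG: "\<forall>g\<in>GG. h2_inner x g = 0"
      show "x = (\<lambda>_. 0)"
      proof (rule key_inj[OF p zrow_nonzero[OF p assms(3)] assms(2)])
        show "x \<in> gen_submodule (insert p (set fs))" using xK unfolding K_def M_def by blast
        show "\<forall>y\<in>gen_submodule {p}. h2_inner x y = 0" using xK unfolding K_def N_def by blast
        show "\<forall>m\<in>gen_submodule (insert p (set fs)). h2_inner x (h2_mult zpoly m) = 0"
          using xK unfolding K_def M_def by blast
        show "\<forall>f\<in>set fs. \<forall>j<degree (zrow p). h2_inner x (h2_mult (wpow j) f) = 0"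
          using xG unfolding GG_def d_def by auto
      qed
    qed
  qed
  have "fin_dim (kernel_on Q (adj Q (Tz Q)))" by (rule fin_dim_mono[OF fK kerK])
  thus ?thesis unfolding Q_def M_def N_def .
qed

end
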